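(* Let $u_0,u_1\in\mathcal E_0(D)$ and let $u_t$, $0<t<1$, be their geodesic. Then: (i) for each $t\in(0,1)$, $u_t(z)\to0$ as $z\to\partial D$; (ii) $u_t\to u_j$ uniformly on $D$ as $t\to j$, for $j=0,1$; (iii) $u_t\le (1-t)u_0+tu_1$ on $D$ for all $t\in(0,1)$; (iv) $u_t\ge\max\{u_0-M_1t,\;u_1-M_0(1-t)\}$ on $D$ for all $t\in(0,1)$, where $M_j=\sup_D|u_j|$.
   Context: $D\subset\mathbb C^n$ is a bounded hyperconvex domain; $\mathrm{PSH}^-(\Omega)$ denotes the set of nonpositive plurisubharmonic functions on $\Omega$. $\mathcal E_0(D)$ is the set of bounded plurisubharmonic functions $u$ on $D$ with $\lim_{z\to\partial D}u(z)=0$ and $\int_D(dd^cu)^n<\infty$. Let $S=\{\zeta\in\mathbb C:1<|\zeta|<e\}$, with boundary circles $S_0=\{|\zeta|=1\}$, $S_1=\{|\zeta|=e\}$. For $u_0,u_1\in\mathcal E_0(D)$, $W(u_0,u_1)$ is the set of $U\in\mathrm{PSH}^-(D\times S)$ such that $\limsup_{(x,\zeta)\to(z,\zeta_0)}U(x,\zeta)\le u_j(z)$ for all $z\in D$, $\zeta_0\in S_j$, $j=0,1$. Let $\widehat u=\sup\{U:U\in W(u_0,u_1)\}$; it belongs to $W(u_0,u_1)$ and depends only on $(z,|\zeta|)$. The geodesic of $u_0,u_1$ is $u_t(z):=\widehat u(z,e^t)$, $0<t<1$. *)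

theory Defs
  imports "HOL-Analysis.Analysis" "HOL-Library.Extended_Real"
begin

definition usc_on :: "'a::topological_space set \<Rightarrow> ('a \<Rightarrow> ereal) \<Rightarrow> bool" where
  "usc_on \<Omega> f \<longleftrightarrow> (\<forall>x\<in>\<Omega>. Limsup (at x within \<Omega>) f \<le> f x)"

text \<open>Mean value of f over the circle t \<mapsto> a + e^{i t} b, computed for an upper bound M
  of f on the circle as M - (1/2pi) int (M - f); this is independent of M and may be -infinity.\<close>
definition circle_mean ::
  "(complex \<Rightarrow> 'a \<Rightarrow> 'a) \<Rightarrow> ('a::real_vector \<Rightarrow> ereal) \<Rightarrow> 'a \<Rightarrow> 'a \<Rightarrow> real \<Rightarrow> ereal" where
  "circle_mean cmul f a b M =
     ereal M - enn2ereal (\<integral>\<^sup>+ t. e2ennreal (ereal M - f (a + cmul (cis t) b))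
                              * indicator {0..2*pi} t \<partial>lborel) / ereal (2*pi)"

text \<open>Plurisubharmonicity on an open set of a complex vector space, where the
  complex scalar multiplication is given by cmul: f is upper semicontinuous, never +infinity,
  and its restriction to every complex line is subharmonic (sub-mean value property on every
  closed disc contained in the set).\<close>
definition psh_gen :: "(complex \<Rightarrow> 'a \<Rightarrow> 'a) \<Rightarrow> 'a::real_normed_vector set \<Rightarrow> ('a \<Rightarrow> ereal) \<Rightarrow> bool" where
  "psh_gen cmul \<Omega> f \<longleftrightarrow> open \<Omega> \<and> usc_on \<Omega> f \<and> (\<forall>x\<in>\<Omega>. f x < \<infinity>) \<and>
     (\<forall>a b. (\<forall>\<zeta>. cmod \<zeta> \<le> 1 \<longrightarrow> a + cmul \<zeta> b \<in> \<Omega>) \<longrightarrow>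
        (\<forall>M::real. (\<forall>t. f (a + cmul (cis t) b) \<le> ereal M) \<longrightarrow> f a \<le> circle_mean cmul f a b M))"

abbreviation psh :: "(complex^'n) set \<Rightarrow> (complex^'n \<Rightarrow> ereal) \<Rightarrow> bool" where
  "psh \<equiv> psh_gen (\<lambda>c v. c *s v)"

definition cmul_pair :: "complex \<Rightarrow> ((complex^'n) \<times> complex) \<Rightarrow> ((complex^'n) \<times> complex)" where
  "cmul_pair c p = (c *s fst p, c * snd p)"

abbreviation psh2 :: "((complex^'n) \<times> complex) set \<Rightarrow> ((complex^'n) \<times> complex \<Rightarrow> ereal) \<Rightarrow> bool" where
  "psh2 \<equiv> psh_gen cmul_pair"

definition hyperconvex :: "(complex^'n) set \<Rightarrow> bool" where
  "hyperconvex D \<longleftrightarrow> open D \<and> connected D \<and> D \<noteq> {} \<and> bounded D \<and>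
     (\<exists>\<rho>::complex^'n \<Rightarrow> real. psh D (\<lambda>z. ereal (\<rho> z)) \<and> continuous_on D \<rho> \<and>
        (\<forall>z\<in>D. \<rho> z < 0) \<and> (\<forall>c<0. closure {z\<in>D. \<rho> z < c} \<subseteq> D))"

definition tends_to_zero_at_boundary :: "'a::topological_space set \<Rightarrow> ('a \<Rightarrow> ereal) \<Rightarrow> bool" where
  "tends_to_zero_at_boundary D f \<longleftrightarrow>
     (\<forall>\<epsilon>>0. \<exists>K. compact K \<and> K \<subseteq> D \<and> (\<forall>z\<in>D - K. \<bar>f z\<bar> < ereal \<epsilon>))"

definition dir_deriv :: "('a::real_normed_vector \<Rightarrow> real) \<Rightarrow> 'a \<Rightarrow> 'a \<Rightarrow> real" where
  "dir_deriv u v z = deriv (\<lambda>t. u (z + t *\<^sub>R v)) 0"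

definition dir_deriv2 :: "('a::real_normed_vector \<Rightarrow> real) \<Rightarrow> 'a \<Rightarrow> 'a \<Rightarrow> 'a \<Rightarrow> real" where
  "dir_deriv2 u v w z = dir_deriv (\<lambda>y. dir_deriv u v y) w z"

definition C2_on :: "'a::real_normed_vector set \<Rightarrow> ('a \<Rightarrow> real) \<Rightarrow> bool" where
  "C2_on U u \<longleftrightarrow> open U \<and> continuous_on U u \<and>
     (\<forall>z\<in>U. \<forall>v. (\<lambda>t. u (z + t *\<^sub>R v)) differentiable (at 0)) \<and>
     (\<forall>z\<in>U. \<forall>v w. (\<lambda>t. dir_deriv u v (z + t *\<^sub>R w)) differentiable (at 0)) \<and>
     (\<forall>v. continuous_on U (dir_deriv u v)) \<and>
     (\<forall>v w. continuous_on U (dir_deriv2 u v w))"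

text \<open>Complex Hessian entry d^2 u / dz_j d(conj z_k), with z_j = x_j + i y_j.\<close>
definition cx_hessian :: "(complex^'n \<Rightarrow> real) \<Rightarrow> complex^'n \<Rightarrow> complex^'n^'n" where
  "cx_hessian u z = (\<chi> j k.
     complex_of_real ((dir_deriv2 u (axis j 1) (axis k 1) z + dir_deriv2 u (axis j \<i>) (axis k \<i>) z) / 4)
     + \<i> * complex_of_real ((dir_deriv2 u (axis j 1) (axis k \<i>) z - dir_deriv2 u (axis j \<i>) (axis k 1) z) / 4))"

text \<open>Density of (dd^c u)^n w.r.t. Lebesgue measure for C^2 u, up to a positive
  dimensional normalising constant (irrelevant for finiteness of the total mass).\<close>
definition MA_density :: "(complex^'n \<Rightarrow> real) \<Rightarrow> complex^'n \<Rightarrow> real" where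
  "MA_density u z = Re (det (cx_hessian u z))"

text \<open>Finiteness of the total Monge--Ampere mass of a bounded psh function u on D,
  using the Bedford--Taylor definition of (dd^c u)^n as the weak limit of (dd^c u_j)^n
  along smooth psh functions decreasing to u: there is a constant C bounding
  the integral of every test function 0 \<le> chi \<le> 1 with compact support in D
  against (dd^c u)^n.\<close>
definition finite_MA_mass :: "(complex^'n) set \<Rightarrow> (complex^'n \<Rightarrow> real) \<Rightarrow> bool" where
  "finite_MA_mass D u \<longleftrightarrow> (\<exists>C::real. \<forall>\<phi> K U useq.
     compact K \<and> open U \<and> K \<subseteq> U \<and> U \<subseteq> D \<and> continuous_on UNIV \<phi> \<and>
     (\<forall>z. 0 \<le> \<phi> z \<and> \<phi> z \<le> 1) \<and> (\<forall>z. z \<notin> K \<longrightarrow> \<phi> z = 0) \<and>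
     (\<forall>j. C2_on U (useq j) \<and> psh U (\<lambda>z. ereal (useq j z))) \<and>
     (\<forall>z\<in>U. (\<forall>j. useq (Suc j) z \<le> useq j z) \<and> (\<lambda>j. useq j z) \<longlonglongrightarrow> u z)
     \<longrightarrow> limsup (\<lambda>j. ereal (integral\<^sup>L lborel (\<lambda>z. \<phi> z * MA_density (useq j) z))) \<le> ereal C)"

definition E0 :: "(complex^'n) set \<Rightarrow> (complex^'n \<Rightarrow> real) set" where
  "E0 D = {u. psh D (\<lambda>z. ereal (u z)) \<and> bounded (u ` D) \<and>
              tends_to_zero_at_boundary D (\<lambda>z. ereal (u z)) \<and> finite_MA_mass D u}"

definition annulus :: "complex set" where
  "annulus = {\<zeta>. 1 < cmod \<zeta> \<and> cmod \<zeta> < exp 1}"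

definition W :: "(complex^'n) set \<Rightarrow> (complex^'n \<Rightarrow> real) \<Rightarrow> (complex^'n \<Rightarrow> real)
                 \<Rightarrow> ((complex^'n) \<times> complex \<Rightarrow> ereal) set" where
  "W D u0 u1 = {U. psh2 (D \<times> annulus) U \<and> (\<forall>p\<in>D \<times> annulus. U p \<le> 0) \<and>
     (\<forall>z\<in>D. \<forall>\<zeta>0. cmod \<zeta>0 = 1 \<longrightarrow>
         Limsup (at (z, \<zeta>0) within D \<times> annulus) U \<le> ereal (u0 z)) \<and>
     (\<forall>z\<in>D. \<forall>\<zeta>0. cmod \<zeta>0 = exp 1 \<longrightarrow>
         Limsup (at (z, \<zeta>0) within D \<times> annulus) U \<le> ereal (u1 z))}"

definition uhat :: "(complex^'n) set \<Rightarrow> (complex^'n \<Rightarrow> real) \<Rightarrow> (complex^'n \<Rightarrow> real)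
                    \<Rightarrow> (complex^'n) \<times> complex \<Rightarrow> ereal" where
  "uhat D u0 u1 p = (SUP U\<in>W D u0 u1. U p)"

definition geodesic :: "(complex^'n) set \<Rightarrow> (complex^'n \<Rightarrow> real) \<Rightarrow> (complex^'n \<Rightarrow> real)
                        \<Rightarrow> real \<Rightarrow> complex^'n \<Rightarrow> ereal" where
  "geodesic D u0 u1 t z = uhat D u0 u1 (z, complex_of_real (exp t))"

end

theory Submission
  imports Defs "HOL-Complex_Analysis.Complex_Analysis"
begin


lemma mean_value_holo:
  assumes "G holomorphic_on cball 0 1"
  shows "((\<lambda>t. G (cis t)) has_integral (2 * of_real pi * G 0)) {0..2*pi}"
proof -
  have "((\<lambda>u. G u / (u - 0)) has_contour_integral 2 * complex_of_real pi * \<i> * G 0) (circlepath 0 1)"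
    by (rule Cauchy_integral_circlepath_simple[OF assms]) simp
  then have "((\<lambda>t. G (0 + complex_of_real 1 * cis t) / (0 + complex_of_real 1 * cis t - 0) * complex_of_real 1 * \<i> * cis t)
      has_integral 2 * complex_of_real pi * \<i> * G 0) {0..2*pi}"
    unfolding circlepath_def by (subst (asm) has_contour_integral_part_circlepath_iff) auto
  then have "((\<lambda>t. G (0 + complex_of_real 1 * cis t) / (0 + complex_of_real 1 * cis t - 0) * complex_of_real 1 * \<i> * cis t * (-\<i>))
      has_integral 2 * complex_of_real pi * \<i> * G 0 * (-\<i>)) {0..2*pi}"
    by (rule has_integral_mult_left)
  moreover have e1: "\<And>t. G (0 + complex_of_real 1 * cis t) / (0 + complex_of_real 1 * cis t - 0) * complex_of_real 1 * \<i> * cis t * (-\<i>) = G (cis t)"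
    by (simp add: field_simps)
  moreover have e2: "2 * complex_of_real pi * \<i> * G 0 * (-\<i>) = 2 * of_real pi * G 0"
    by (simp add: field_simps)
  ultimately show ?thesis by (simp only: e1 e2)
qed

lemma mean_Re_holo:
  assumes "G holomorphic_on cball 0 1"
  shows "((\<lambda>t. Re (G (cis t))) has_integral (2 * pi * Re (G 0))) {0..2*pi}"
  using has_integral_Re[OF mean_value_holo[OF assms]] by simp

lemma mean_sq:
  fixes c :: complex and r :: real
  shows "((\<lambda>t. (cmod (c + cis t * of_real r))\<^sup>2) has_integral (2*pi*((cmod c)\<^sup>2 + r\<^sup>2))) {0..2*pi}"
proof -
  have h: "(\<lambda>z. cnj c * of_real r * z) holomorphic_on cball 0 1"
    by (intro holomorphic_intros)
  have I1: "((\<lambda>t. Re (cnj c * of_real r * cis t)) has_integral 0) {0..2*pi}"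
    using mean_Re_holo[OF h] by simp
  have I2: "((\<lambda>t. (cmod c)\<^sup>2 + r\<^sup>2) has_integral (2*pi*((cmod c)\<^sup>2 + r\<^sup>2))) {0..2*pi}"
    using has_integral_const_real[of "(cmod c)\<^sup>2 + r\<^sup>2" 0 "2*pi"] by simp
  have eq: "(cmod (c + cis t * of_real r))\<^sup>2 = ((cmod c)\<^sup>2 + r\<^sup>2) + 2 * Re (cnj c * of_real r * cis t)" for t
  proof -
    have s: "(sin t)\<^sup>2 + (cos t)\<^sup>2 = 1" by simp
    show ?thesis unfolding cmod_power2 using s
      by (simp add: power2_eq_square algebra_simps) (simp add: algebra_simps flip: distrib_left)
  qed
  show ?thesis
    using has_integral_add[OF I2 has_integral_cmul[OF I1, of 2]] by (simp add: eq)
qed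



lemma mean_log:
  fixes a b :: complex assumes ab: "cmod b < cmod a"
  shows "((\<lambda>t. ln (cmod (a + cis t * b))) has_integral (2*pi*ln (cmod a))) {0..2*pi}"
proof -
  have a0: "a \<noteq> 0" using ab by auto
  have pos: "0 < Re (1 + z * (b/a))" if "z \<in> cball 0 1" for z
  proof -
    have "cmod (z * (b/a)) = cmod z * (cmod b / cmod a)" by (simp add: norm_mult norm_divide)
    also have "\<dots> < 1"
    proof -
      have "cmod z \<le> 1" using that by simp
      moreover have "cmod b / cmod a < 1" using ab a0 by simp
      moreover have "0 \<le> cmod b / cmod a" by simp
      ultimately show ?thesis by (meson le_less_trans mult_left_le_one_le norm_ge_zero)
    qed
    finally have "cmod (z * (b/a)) < 1" .
    moreover have "- Re (z * (b/a)) \<le> cmod (z * (b/a))"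
      by (metis abs_Re_le_cmod abs_le_iff)
    ultimately show ?thesis by simp
  qed
  have h: "(\<lambda>z. Ln (1 + z * (b/a))) holomorphic_on cball 0 1"
  proof (intro holomorphic_intros)
    fix z :: complex assume "z \<in> cball 0 1"
    then show "1 + z * (b/a) \<notin> \<real>\<^sub>\<le>\<^sub>0" using pos
      by (metis complex_nonpos_Reals_iff less_irrefl order_less_le_trans)
  qed
  have I: "((\<lambda>t. Re (Ln (1 + cis t * (b/a)))) has_integral 0) {0..2*pi}"
    using mean_Re_holo[OF h] by simp
  have eq: "Re (Ln (1 + cis t * (b/a))) = ln (cmod (a + cis t * b)) - ln (cmod a)" for t
  proof -
    have "0 < Re (1 + cis t * (b/a))" using pos[of "cis t"] by simp
    then have nz: "1 + cis t * (b/a) \<noteq> 0" by (metis less_irrefl zero_complex.sel(1))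
    have e: "1 + cis t * (b/a) = (a + cis t * b) / a" using a0 by (simp add: field_simps)
    then have "cmod (1 + cis t * (b/a)) = cmod (a + cis t * b) / cmod a" by (simp add: norm_divide)
    moreover have "cmod (a + cis t * b) > 0" using nz e by auto
    ultimately show ?thesis using nz a0 by (simp add: Re_Ln ln_div)
  qed
  have I2: "((\<lambda>t. ln (cmod a)) has_integral (2*pi*ln (cmod a))) {0..2*pi}"
    using has_integral_const_real[of "ln (cmod a)" 0 "2*pi"] by simp
  have "((\<lambda>t. Re (Ln (1 + cis t * (b/a))) + ln (cmod a)) has_integral (0 + 2*pi*ln (cmod a))) {0..2*pi}"
    by (rule has_integral_add[OF I I2])
  then show ?thesis unfolding eq by simp
qed



lemma nn_circle:
  assumes "(\<psi> has_integral I) {0..2*pi}" "\<forall>t\<in>{0..2*pi}. 0 \<le> \<psi> t"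
  shows "(\<integral>\<^sup>+ t. ennreal (\<psi> t) * indicator {0..2*pi} t \<partial>lborel) = ennreal I"
  using nn_integral_has_integral_lebesgue'[of "{0..2*pi}" \<psi> I] assms by auto

lemma circle_mean_le:
  assumes g: "(g has_integral I) {0..2*pi}"
    and le: "\<forall>t\<in>{0..2*pi}. f (a + cmul (cis t) b) \<le> ereal (g t)"
    and gM: "\<forall>t\<in>{0..2*pi}. g t \<le> M"
  shows "circle_mean cmul f a b M \<le> ereal (I / (2*pi))"
proof -
  have gM': "((\<lambda>t. M - g t) has_integral (2*pi*M - I)) {0..2*pi}"
    using has_integral_diff[OF has_integral_const_real[of M 0 "2*pi"] g] by simp
  have N: "(\<integral>\<^sup>+ t. ennreal (M - g t) * indicator {0..2*pi} t \<partial>lborel) = ennreal (2*pi*M - I)"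
    using nn_circle[OF gM'] gM by auto
  have IM: "I \<le> 2*pi*M"
    using has_integral_le[OF g has_integral_const_real[of M 0 "2*pi"]] gM by simp
  define X where "X = (\<integral>\<^sup>+ t. e2ennreal (ereal M - f (a + cmul (cis t) b)) * indicator {0..2*pi} t \<partial>lborel)"
  have "(\<integral>\<^sup>+ t. ennreal (M - g t) * indicator {0..2*pi} t \<partial>lborel) \<le> X"
    unfolding X_def
  proof (rule nn_integral_mono)
    fix t
    show "ennreal (M - g t) * indicator {0..2*pi} t \<le> e2ennreal (ereal M - f (a + cmul (cis t) b)) * indicator {0..2*pi} t"
    proof (cases "t \<in> {0..2*pi}")
      case True
      have "ereal (M - g t) \<le> ereal M - f (a + cmul (cis t) b)"
        using le True
        by (metis ereal_minus(1) ereal_minus_mono order_refl)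
      then have "e2ennreal (ereal (M - g t)) \<le> e2ennreal (ereal M - f (a + cmul (cis t) b))"
        by (rule e2ennreal_mono)
      then show ?thesis using True by (simp add: e2ennreal_ereal)
    qed simp
  qed
  then have XI: "ennreal (2*pi*M - I) \<le> X" using N by simp
  have "ereal (2*pi*M - I) \<le> enn2ereal X"
  proof -
    have "enn2ereal (ennreal (2*pi*M - I)) \<le> enn2ereal X" using XI by (simp add: less_eq_ennreal.rep_eq)
    then show ?thesis using IM by simp
  qed
  then have "ereal M - enn2ereal X / ereal (2*pi) \<le> ereal M - ereal (2*pi*M - I) / ereal (2*pi)"
    by (intro ereal_minus_mono order_refl ereal_divide_right_mono) auto
  also have "\<dots> = ereal (I / (2*pi))"
    by (simp add: field_simps)
  finally show ?thesis unfolding circle_mean_def X_def .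
qed

lemma circle_mean_eq:
  assumes g: "(g has_integral I) {0..2*pi}"
    and eq: "\<forall>t\<in>{0..2*pi}. f (a + cmul (cis t) b) = ereal (g t)"
    and gM: "\<forall>t\<in>{0..2*pi}. g t \<le> M"
  shows "circle_mean cmul f a b M = ereal (I / (2*pi))"
proof -
  have gM': "((\<lambda>t. M - g t) has_integral (2*pi*M - I)) {0..2*pi}"
    using has_integral_diff[OF has_integral_const_real[of M 0 "2*pi"] g] by simp
  have N: "(\<integral>\<^sup>+ t. ennreal (M - g t) * indicator {0..2*pi} t \<partial>lborel) = ennreal (2*pi*M - I)"
    using nn_circle[OF gM'] gM by auto
  have IM: "I \<le> 2*pi*M"
    using has_integral_le[OF g has_integral_const_real[of M 0 "2*pi"]] gM by simp
  have X: "(\<integral>\<^sup>+ t. e2ennreal (ereal M - f (a + cmul (cis t) b)) * indicator {0..2*pi} t \<partial>lborel)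
     = (\<integral>\<^sup>+ t. ennreal (M - g t) * indicator {0..2*pi} t \<partial>lborel)"
    by (rule nn_integral_cong) (auto simp: eq e2ennreal_ereal indicator_def)
  show ?thesis unfolding circle_mean_def X N using IM
    by (simp add: field_simps)
qed

lemma psh_mean_le:
  assumes "psh_gen cmul \<Omega> f" "\<forall>\<zeta>. cmod \<zeta> \<le> 1 \<longrightarrow> a + cmul \<zeta> b \<in> \<Omega>"
    "(g has_integral I) {0..2*pi}" "\<forall>t. f (a + cmul (cis t) b) \<le> ereal (g t)" "\<forall>t. g t \<le> M"
  shows "f a \<le> ereal (I/(2*pi))"
proof -
  have "f a \<le> circle_mean cmul f a b M"
    using assms(1,2,4,5) unfolding psh_gen_def by (meson ereal_less_eq(3) order_trans)
  also have "\<dots> \<le> ereal (I/(2*pi))"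
    by (rule circle_mean_le) (use assms in auto)
  finally show ?thesis .
qed



lemma usc_onD:
  assumes "usc_on \<Omega> f" "x \<in> \<Omega>" "f x < y"
  shows "eventually (\<lambda>p. p \<in> \<Omega> \<longrightarrow> f p < y) (nhds x)"
proof -
  have "Limsup (at x within \<Omega>) f < y" using assms unfolding usc_on_def by (meson le_less_trans)
  then have "eventually (\<lambda>p. f p < y) (at x within \<Omega>)" by (rule Limsup_lessD)
  then have "eventually (\<lambda>p. p \<noteq> x \<longrightarrow> p \<in> \<Omega> \<longrightarrow> f p < y) (nhds x)"
    by (simp add: eventually_at_filter)
  then show ?thesis by eventually_elim (use assms in auto)
qed

lemma usc_onI:
  assumes "\<And>x y. x \<in> \<Omega> \<Longrightarrow> f x < y \<Longrightarrow> eventually (\<lambda>p. p \<in> \<Omega> \<longrightarrow> f p < y) (nhds x)"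
  shows "usc_on \<Omega> f"
  unfolding usc_on_def
proof (intro ballI)
  fix x assume x: "x \<in> \<Omega>"
  show "Limsup (at x within \<Omega>) f \<le> f x"
    unfolding Limsup_le_iff
  proof (intro allI impI)
    fix y assume "f x < y"
    from assms[OF x this] have "eventually (\<lambda>p. p \<noteq> x \<longrightarrow> p \<in> \<Omega> \<longrightarrow> f p < y) (nhds x)"
      by eventually_elim auto
    then show "eventually (\<lambda>p. y > f p) (at x within \<Omega>)"
      by (simp add: eventually_at_filter)
  qed
qed

lemma usc_path_borel:
  assumes usc: "usc_on \<Omega> f" and cont: "continuous_on UNIV \<gamma>" and inn: "\<And>t. \<gamma> t \<in> \<Omega>"
  shows "(\<lambda>t::real. f (\<gamma> t)) \<in> borel_measurable borel"
proof (rule borel_measurableI_less[where f="\<lambda>t. f (\<gamma> t)" and M=borel])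
  fix y
  have "open {t. f (\<gamma> t) < y}"
  proof (rule open_subopen[THEN iffD2], intro ballI)
    fix t assume "t \<in> {t. f (\<gamma> t) < y}"
    then have "eventually (\<lambda>p. p \<in> \<Omega> \<longrightarrow> f p < y) (nhds (\<gamma> t))"
      using usc_onD[OF usc inn[of t]] by simp
    moreover have "filterlim \<gamma> (nhds (\<gamma> t)) (nhds t)"
    proof -
      have "isCont \<gamma> t" using cont by (simp add: continuous_on_eq_continuous_at)
      then show ?thesis by (simp add: isCont_def tendsto_at_iff_tendsto_nhds)
    qed
    ultimately have "eventually (\<lambda>s. \<gamma> s \<in> \<Omega> \<longrightarrow> f (\<gamma> s) < y) (nhds t)"
      by (rule eventually_compose_filterlim)
    then have "eventually (\<lambda>s. f (\<gamma> s) < y) (nhds t)" using inn by simp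
    then show "\<exists>T. open T \<and> t \<in> T \<and> T \<subseteq> {t. f (\<gamma> t) < y}"
      unfolding eventually_nhds by auto
  qed
  then have "{t. f (\<gamma> t) < y} \<in> sets borel" by (rule borel_open)
  then show "{x \<in> space borel. f (\<gamma> x) < y} \<in> sets borel" by (simp only: space_borel UNIV_I simp_thms)
qed

lemma usc_max_closure:
  fixes w :: "'a::metric_space \<Rightarrow> ereal"
  assumes C: "compact C" and AC: "A \<subseteq> C" and x0: "x0 \<in> A" "c < w x0"
   and bd: "\<forall>l\<in>C - A. eventually (\<lambda>p. p\<in>A \<longrightarrow> w p < c) (nhds l)"
   and usc: "\<forall>l\<in>A. \<forall>y. w l < y \<longrightarrow> eventually (\<lambda>p. p\<in>A \<longrightarrow> w p < y) (nhds l)"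
  shows "\<exists>l\<in>A. \<forall>p\<in>A. w p \<le> w l"
proof -
  define S where "S = Sup (w ` A)"
  obtain f where f: "incseq f" "range f \<subseteq> w ` A" "S = Sup (range f)"
    using Sup_countable_SUP[of "w ` A"] x0 unfolding S_def by auto
  have "\<forall>k. \<exists>x. x \<in> A \<and> w x = f k" using f(2) by (metis image_iff range_subsetD)
  then obtain xs where xs: "\<And>k. xs k \<in> A" "\<And>k. w (xs k) = f k" by metis
  have fS: "f \<longlonglongrightarrow> S" using f by (simp add: LIMSEQ_SUP)
  obtain l r where lr: "l \<in> C" "strict_mono r" "(xs \<circ> r) \<longlonglongrightarrow> l"
    using compact_imp_seq_compact[OF C] xs(1) AC unfolding seq_compact_def by (metis subsetD)
  have wS: "(\<lambda>k. w (xs (r k))) \<longlonglongrightarrow> S"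
    using LIMSEQ_subseq_LIMSEQ[OF fS lr(2)] xs(2) by (simp add: o_def)
  have Sge: "w x0 \<le> S" unfolding S_def using x0 by (simp add: SUP_upper)
  have ev: "eventually (\<lambda>k. w (xs (r k)) < y) sequentially"
    if "eventually (\<lambda>p. p\<in>A \<longrightarrow> w p < y) (nhds l)" for y
  proof -
    have "eventually (\<lambda>k. (xs \<circ> r) k \<in> A \<longrightarrow> w ((xs \<circ> r) k) < y) sequentially"
      using that lr(3) by (rule eventually_compose_filterlim)
    then show ?thesis using xs(1) by simp
  qed
  have lA: "l \<in> A"
  proof (rule ccontr)
    assume "l \<notin> A"
    then have "eventually (\<lambda>k. w (xs (r k)) < c) sequentially" using bd lr(1) ev by auto
    moreover have "eventually (\<lambda>k. c < w (xs (r k))) sequentially"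
      using order_tendstoD(1)[OF wS] x0(2) Sge by auto
    ultimately have "eventually (\<lambda>k. False) sequentially"
      by eventually_elim auto
    then show False by simp
  qed
  have "S \<le> w l"
  proof (rule dense_ge)
    fix y assume "w l < y"
    then have e1: "eventually (\<lambda>k. w (xs (r k)) < y) sequentially" using usc lA ev by auto
    show "S \<le> y"
    proof (rule ccontr)
      assume "\<not> S \<le> y"
      then have "eventually (\<lambda>k. y < w (xs (r k))) sequentially"
        using order_tendstoD(1)[OF wS] by auto
      with e1 have "eventually (\<lambda>k. False) sequentially" by eventually_elim auto
      then show False by simp
    qed
  qed
  moreover have "\<forall>p\<in>A. w p \<le> S" unfolding S_def by (simp add: SUP_upper)
  ultimately show ?thesis using lA by (meson order_trans)
qed



lemma cont_ev_less:
  fixes g :: "'a::t2_space \<Rightarrow> real"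
  assumes "isCont g x" "g x < b"
  shows "eventually (\<lambda>p. g p < b) (nhds x)"
proof -
  have "(g \<longlongrightarrow> g x) (nhds x)" using assms(1) by (simp add: isCont_def tendsto_at_iff_tendsto_nhds)
  then show ?thesis using assms(2) by (rule order_tendstoD(2))
qed

lemma usc_add_cont:
  fixes g :: "'a::t2_space \<Rightarrow> real"
  assumes usc: "usc_on \<Omega> F" and cont: "\<And>x. x \<in> \<Omega> \<Longrightarrow> isCont g x"
  shows "usc_on \<Omega> (\<lambda>p. F p + ereal (g p))"
proof (rule usc_onI)
  fix x y assume x: "x \<in> \<Omega>" and lt: "F x + ereal (g x) < y"
  have "F x < y - ereal (g x)" using lt
    by (simp add: ereal_less_minus)
  then obtain y1 where y1: "F x < y1" "y1 < y - ereal (g x)" using dense by blast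
  then obtain r where r: "y1 = ereal r"
    by (cases y1) auto
  have "ereal (r + g x) < y" using y1 r
    by (simp add: ereal_less_minus flip: plus_ereal.simps(1))
  then obtain s where s: "ereal (r + g x) < ereal s" "ereal s < y" using ereal_dense2 by blast
  have e1: "eventually (\<lambda>p. p \<in> \<Omega> \<longrightarrow> F p < ereal r) (nhds x)" using usc_onD[OF usc x] y1 r by simp
  have e2: "eventually (\<lambda>p. g p < g x + (s - r - g x)) (nhds x)"
    using cont_ev_less[OF cont[OF x]] s by simp
  show "eventually (\<lambda>p. p \<in> \<Omega> \<longrightarrow> F p + ereal (g p) < y) (nhds x)"
    using e1 e2
  proof eventually_elim
    case (elim p)
    show ?case
    proof
      assume "p \<in> \<Omega>"
      then have "F p + ereal (g p) \<le> ereal r + ereal (g p)"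
        using elim by (intro add_right_mono) simp
      also have "\<dots> < ereal s" using elim by simp
      finally show "F p + ereal (g p) < y" using s(2) by simp
    qed
  qed
qed

lemma usc_add_real:
  assumes f: "usc_on \<Omega> (\<lambda>p. ereal (f p))" and g: "usc_on \<Omega> (\<lambda>p. ereal (g p))"
  shows "usc_on \<Omega> (\<lambda>p. ereal (f p + g p))"
proof (rule usc_onI)
  fix x y assume x: "x \<in> \<Omega>" and lt: "ereal (f x + g x) < y"
  show "eventually (\<lambda>p. p \<in> \<Omega> \<longrightarrow> ereal (f p + g p) < y) (nhds x)"
  proof (cases y)
    case (real y')
    define \<eta> where "\<eta> = (y' - f x - g x) / 2"
    have "\<eta> > 0" using lt real by (simp add: \<eta>_def)
    have e1: "eventually (\<lambda>p. p \<in> \<Omega> \<longrightarrow> ereal (f p) < ereal (f x + \<eta>)) (nhds x)"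
      using usc_onD[OF f x, of "ereal (f x + \<eta>)"] \<open>\<eta> > 0\<close> by simp
    have e2: "eventually (\<lambda>p. p \<in> \<Omega> \<longrightarrow> ereal (g p) < ereal (g x + \<eta>)) (nhds x)"
      using usc_onD[OF g x, of "ereal (g x + \<eta>)"] \<open>\<eta> > 0\<close> by simp
    show ?thesis using e1 e2 by eventually_elim (auto simp: real \<eta>_def field_simps)
  next
    case PInf then show ?thesis by simp
  next
    case MInf then show ?thesis using lt by simp
  qed
qed

lemma usc_max:
  assumes "usc_on \<Omega> F" "usc_on \<Omega> G"
  shows "usc_on \<Omega> (\<lambda>p. max (F p) (G p))"
proof (rule usc_onI)
  fix x y assume x: "x \<in> \<Omega>" and lt: "max (F x) (G x) < y"
  have e1: "eventually (\<lambda>p. p \<in> \<Omega> \<longrightarrow> F p < y) (nhds x)" using usc_onD[OF assms(1) x] lt by simp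
  have e2: "eventually (\<lambda>p. p \<in> \<Omega> \<longrightarrow> G p < y) (nhds x)" using usc_onD[OF assms(2) x] lt by simp
  show "eventually (\<lambda>p. p \<in> \<Omega> \<longrightarrow> max (F p) (G p) < y) (nhds x)"
    using e1 e2 by eventually_elim auto
qed

lemma usc_comp:
  assumes usc: "usc_on \<Omega> F" and h: "\<And>x. x \<in> \<Omega>' \<Longrightarrow> isCont h x \<and> h x \<in> \<Omega>"
  shows "usc_on \<Omega>' (\<lambda>p. F (h p))"
proof (rule usc_onI)
  fix x y assume x: "x \<in> \<Omega>'" and lt: "F (h x) < y"
  have "eventually (\<lambda>q. q \<in> \<Omega> \<longrightarrow> F q < y) (nhds (h x))" using usc_onD[OF usc _ lt] h[OF x] by simp
  moreover have "filterlim h (nhds (h x)) (nhds x)"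
    using h[OF x] by (simp add: isCont_def tendsto_at_iff_tendsto_nhds)
  ultimately have "eventually (\<lambda>p. h p \<in> \<Omega> \<longrightarrow> F (h p) < y) (nhds x)"
    by (rule eventually_compose_filterlim)
  then show "eventually (\<lambda>p. p \<in> \<Omega>' \<longrightarrow> F (h p) < y) (nhds x)"
    by eventually_elim (use h in auto)
qed



lemma axis_smult_nth:
  fixes l :: "complex^'n"
  shows "(l + c *s axis i (x::complex)) $ i = l $ i + c * x"
  by simp

lemma norm_smult_axis:
  fixes c x :: complex
  shows "norm (c *s (axis i x :: complex^'n)) \<le> cmod c * cmod x"
proof -
  have "norm (c *s (axis i x :: complex^'n)) \<le> (\<Sum>j\<in>UNIV. norm ((c *s (axis i x :: complex^'n)) $ j))"
    unfolding norm_vec_def by (rule L2_set_le_sum) simp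
  also have "(\<lambda>j. norm ((c *s (axis i x :: complex^'n)) $ j)) = (\<lambda>j. if j = i then cmod (c * x) else 0)"
    by (auto simp: axis_def)
  also have "(\<Sum>j\<in>UNIV. (if j = i then cmod (c * x) else 0)) = cmod (c * x)"
    by simp
  finally show ?thesis by (simp add: norm_mult)
qed

lemma E0_nonpos:
  fixes D :: "(complex^'n) set"
  assumes bD: "bounded D" and u: "u \<in> E0 D" and z1: "z1 \<in> D"
  shows "u z1 \<le> 0"
proof (rule ccontr)
  assume "\<not> u z1 \<le> 0"
  then have pos: "u z1 > 0" by simp
  have psh: "psh D (\<lambda>z. ereal (u z))" and tz: "tends_to_zero_at_boundary D (\<lambda>z. ereal (u z))"
    using u unfolding E0_def by auto
  have oD: "open D" and uscu: "usc_on D (\<lambda>z. ereal (u z))"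
    using psh unfolding psh_gen_def by auto
  obtain R where R: "\<forall>z\<in>D. norm z \<le> R" using bD bounded_iff by blast
  define i0 :: 'n where "i0 = undefined"
  define \<phi> where "\<phi> z = (cmod (z $ i0))\<^sup>2" for z :: "complex^'n"
  have \<phi>R: "\<phi> z \<le> R\<^sup>2" if "z \<in> D" for z
  proof -
    have "cmod (z $ i0) \<le> R" by (rule order_trans[OF Finite_Cartesian_Product.norm_nth_le]) (use R that in simp)
    then show ?thesis unfolding \<phi>_def by (simp add: power_mono)
  qed
  define \<delta> where "\<delta> = u z1 / 3"
  define \<epsilon> where "\<epsilon> = \<delta> / (R\<^sup>2 + 1)"
  have \<delta>pos: "\<delta> > 0" using pos by (simp add: \<delta>_def)
  have \<epsilon>pos: "\<epsilon> > 0" using \<delta>pos unfolding \<epsilon>_def by (intro divide_pos_pos) (auto intro: add_nonneg_pos)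
  have \<epsilon>R: "\<epsilon> * R\<^sup>2 < \<delta>"
  proof -
    have "\<epsilon> * R\<^sup>2 < \<epsilon> * (R\<^sup>2 + 1)" using \<epsilon>pos by simp
    also have "\<dots> = \<delta>" unfolding \<epsilon>_def
      by (metis add_nonneg_pos nonzero_eq_divide_eq order_less_irrefl zero_le_power2 zero_less_one)
    finally show ?thesis .
  qed
  obtain K where K: "compact K" "K \<subseteq> D" "\<forall>z\<in>D - K. \<bar>ereal (u z)\<bar> < ereal \<delta>"
    using tz \<delta>pos unfolding tends_to_zero_at_boundary_def by blast
  define w where "w z = ereal (u z) + ereal (\<epsilon> * \<phi> z)" for z
  have uscw: "usc_on D w"
    unfolding w_def by (rule usc_add_cont[OF uscu]) (simp add: \<phi>_def)
  have "\<exists>l\<in>D. \<forall>p\<in>D. w p \<le> w l"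
  proof (rule usc_max_closure[of "closure D" D z1 "ereal (2*\<delta>)" w])
    show "compact (closure D)" using bD by (simp add: compact_closure)
    show "D \<subseteq> closure D" by (rule closure_subset)
    show "z1 \<in> D" by (rule z1)
    have "0 \<le> \<epsilon> * \<phi> z1" using \<epsilon>pos by (simp add: \<phi>_def)
    then show "ereal (2 * \<delta>) < w z1" unfolding w_def using \<delta>pos by (simp add: \<delta>_def)
    show "\<forall>l\<in>closure D - D. \<forall>\<^sub>F p in nhds l. p \<in> D \<longrightarrow> w p < ereal (2 * \<delta>)"
    proof
      fix l assume "l \<in> closure D - D"
      then have "l \<in> - K" using K(2) by auto
      moreover have "open (- K)" using K(1) by (simp add: compact_imp_closed open_Compl)
      ultimately have "eventually (\<lambda>p. p \<in> - K) (nhds l)" by (rule eventually_nhds_in_open[rotated])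
      then show "\<forall>\<^sub>F p in nhds l. p \<in> D \<longrightarrow> w p < ereal (2 * \<delta>)"
      proof eventually_elim
        case (elim p)
        show ?case
        proof
          assume pD: "p \<in> D"
          then have "\<bar>u p\<bar> < \<delta>" using K(3) elim by auto
          moreover have "\<epsilon> * \<phi> p \<le> \<epsilon> * R\<^sup>2" using \<phi>R[OF pD] \<epsilon>pos by simp
          ultimately show "w p < ereal (2 * \<delta>)" unfolding w_def using \<epsilon>R by simp
        qed
      qed
    qed
    show "\<forall>l\<in>D. \<forall>y. w l < y \<longrightarrow> (\<forall>\<^sub>F p in nhds l. p \<in> D \<longrightarrow> w p < y)"
      using usc_onD[OF uscw] by blast
  qed
  then obtain l where lD: "l \<in> D" and lmax: "\<forall>p\<in>D. w p \<le> w l" by blast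
  obtain r where r: "r > 0" "ball l r \<subseteq> D" using oD lD openE by blast
  define r' where "r' = r / 2"
  have r'pos: "r' > 0" using r by (simp add: r'_def)
  define S where "S = u l + \<epsilon> * \<phi> l"
  define g where "g t = S - \<epsilon> * (cmod (l $ i0 + cis t * complex_of_real r'))\<^sup>2" for t
  have disc: "\<forall>\<zeta>. cmod \<zeta> \<le> 1 \<longrightarrow> l + \<zeta> *s axis i0 (complex_of_real r') \<in> D"
  proof (intro allI impI)
    fix \<zeta> :: complex assume "cmod \<zeta> \<le> 1"
    then have "norm (\<zeta> *s (axis i0 (complex_of_real r') :: complex^'n)) < r"
    proof -
      have "cmod \<zeta> * cmod (complex_of_real r') \<le> 1 * r'" using \<open>cmod \<zeta> \<le> 1\<close> r'pos
        by (intro mult_mono) auto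
      moreover have "r' < r" using r by (simp add: r'_def)
      moreover have "cmod (complex_of_real r') = r'" using r'pos by simp
      ultimately show ?thesis using norm_smult_axis[of \<zeta> i0 "complex_of_real r'"] by linarith
    qed
    then show "l + \<zeta> *s axis i0 (complex_of_real r') \<in> D"
      using r(2) by (simp add: dist_norm subset_iff)
  qed
  have gI: "(g has_integral (2*pi*S - \<epsilon> * (2*pi*((cmod (l $ i0))\<^sup>2 + r'\<^sup>2)))) {0..2*pi}"
  proof -
    have c: "((\<lambda>t. S) has_integral 2*pi*S) {0..2*pi}"
      using has_integral_const_real[of S 0 "2*pi"] by simp
    show ?thesis unfolding g_def
      by (rule has_integral_diff[OF c has_integral_mult_right[OF mean_sq]])
  qed
  have le: "\<forall>t. ereal (u (l + cis t *s axis i0 (complex_of_real r'))) \<le> ereal (g t)"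
  proof
    fix t
    let ?p = "l + cis t *s axis i0 (complex_of_real r')"
    have pD: "?p \<in> D" using disc by simp
    have "w ?p \<le> w l" using lmax pD by blast
    then have "u ?p + \<epsilon> * \<phi> ?p \<le> S" unfolding w_def S_def by simp
    moreover have "\<phi> ?p = (cmod (l $ i0 + cis t * complex_of_real r'))\<^sup>2"
      unfolding \<phi>_def by simp
    ultimately show "ereal (u ?p) \<le> ereal (g t)" unfolding g_def by simp
  qed
  have gM: "\<forall>t. g t \<le> S" unfolding g_def using \<epsilon>pos by simp
  have "ereal (u l) \<le> ereal ((2*pi*S - \<epsilon> * (2*pi*((cmod (l $ i0))\<^sup>2 + r'\<^sup>2))) / (2*pi))"
    by (rule psh_mean_le[OF psh[unfolded psh_gen_def[symmetric]] disc gI le gM])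
  then have "u l \<le> (2*pi*S - \<epsilon> * (2*pi*((cmod (l $ i0))\<^sup>2 + r'\<^sup>2))) / (2*pi)" by simp
  also have "\<dots> = S - \<epsilon> * (\<phi> l + r'\<^sup>2)"
    by (simp add: field_simps \<phi>_def)
  finally have "u l \<le> S - \<epsilon> * (\<phi> l + r'\<^sup>2)" .
  then have "\<epsilon> * r'\<^sup>2 \<le> 0" unfolding S_def by (simp add: algebra_simps)
  moreover have "\<epsilon> * r'\<^sup>2 > 0" using \<epsilon>pos r'pos by simp
  ultimately show False by simp
qed



lemma ereal_add_lt_aux:
  assumes "X < ereal a" "b < c"
  shows "X + ereal b < ereal (a + c)"
proof -
  have "X + ereal b \<le> ereal a + ereal b" using assms(1) by (intro add_right_mono) simp
  also have "\<dots> < ereal (a + c)" using assms(2) by simp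
  finally show ?thesis .
qed

lemma ereal_add_le_aux:
  assumes "X + ereal b \<le> ereal a"
  shows "X \<le> ereal (a - b)"
  using assms by (cases X) auto

lemma annulus_iff: "\<zeta> \<in> annulus \<longleftrightarrow> 1 < cmod \<zeta> \<and> cmod \<zeta> < exp 1"
  by (simp add: annulus_def)

lemma open_annulus: "open annulus"
proof -
  have "annulus = {\<zeta>. 1 < cmod \<zeta>} \<inter> {\<zeta>. cmod \<zeta> < exp 1}" by (auto simp: annulus_def)
  also have "open \<dots>"
    by (intro open_Int open_Collect_less continuous_intros)
  finally show ?thesis .
qed

lemma cmul_pair_circle:
  "(z, l) + cmul_pair c (0, \<rho>) = (z, l + c * \<rho>)"
  by (simp add: cmul_pair_def)

lemma boundary_ev:
  fixes U :: "(complex^'n) \<times> complex \<Rightarrow> ereal"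
  assumes lim: "Limsup (at (z, l) within D \<times> annulus) U \<le> ereal A" and l: "l \<notin> annulus" and z: "z \<in> D"
    and "\<eta> > 0"
  shows "eventually (\<lambda>p. p \<in> annulus \<longrightarrow> U (z, p) < ereal (A + \<eta>)) (nhds l)"
proof -
  have "Limsup (at (z, l) within D \<times> annulus) U < ereal (A + \<eta>)"
    by (rule le_less_trans[OF lim]) (use \<open>\<eta> > 0\<close> in simp)
  then have "eventually (\<lambda>q. U q < ereal (A + \<eta>)) (at (z, l) within D \<times> annulus)"
    by (rule Limsup_lessD)
  then have e: "eventually (\<lambda>q. q \<noteq> (z, l) \<longrightarrow> q \<in> D \<times> annulus \<longrightarrow> U q < ereal (A + \<eta>)) (nhds (z, l))"
    by (simp add: eventually_at_filter)
  have "filterlim (\<lambda>p. (z, p)) (nhds (z, l)) (nhds l)"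
    by (intro tendsto_Pair tendsto_const filterlim_ident)
  from eventually_compose_filterlim[OF e this]
  have "eventually (\<lambda>p. (z, p) \<noteq> (z, l) \<longrightarrow> (z, p) \<in> D \<times> annulus \<longrightarrow> U (z, p) < ereal (A + \<eta>)) (nhds l)" .
  then show ?thesis
    by eventually_elim (use l z in auto)
qed

lemma W_upper:
  fixes D :: "(complex^'n) set"
  assumes U: "U \<in> W D u0 u1" and z: "z \<in> D" and \<zeta>: "\<zeta> \<in> annulus"
  shows "U (z, \<zeta>) \<le> ereal (u0 z * (1 - ln (cmod \<zeta>)) + u1 z * ln (cmod \<zeta>))"
proof -
  define A where "A = u0 z"
  define B where "B = u1 z"
  define E where "E = exp (1::real)"
  define h where "h q = A * (1 - ln (cmod q)) + B * ln (cmod q)" for q :: complex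
  have psh: "psh2 (D \<times> annulus) U"
    and lim0: "\<forall>\<zeta>0. cmod \<zeta>0 = 1 \<longrightarrow> Limsup (at (z, \<zeta>0) within D \<times> annulus) U \<le> ereal A"
    and lim1: "\<forall>\<zeta>0. cmod \<zeta>0 = E \<longrightarrow> Limsup (at (z, \<zeta>0) within D \<times> annulus) U \<le> ereal B"
    using U z unfolding W_def A_def B_def E_def by auto
  have usc: "usc_on (D \<times> annulus) U" and fin: "\<forall>p\<in>D \<times> annulus. U p < \<infinity>"
    using psh unfolding psh_gen_def by auto
  have E1: "1 < E" unfolding E_def by simp
  have key: "U (z, \<zeta>) \<le> ereal (h \<zeta> + e)" if epos: "e > 0" for e
  proof -
    define \<epsilon> where "\<epsilon> = e / E\<^sup>2"
    have \<epsilon>pos: "\<epsilon> > 0" using epos E1 unfolding \<epsilon>_def by simp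
    have \<epsilon>E: "\<epsilon> * E\<^sup>2 = e" using E1 unfolding \<epsilon>_def by simp
    define g where "g q = \<epsilon> * (cmod q)\<^sup>2 - h q" for q
    define w where "w q = U (z, q) + ereal (g q)" for q
    have claim: "\<forall>q\<in>annulus. w q \<le> ereal (\<epsilon> * E\<^sup>2)"
    proof (rule ccontr)
      assume "\<not> (\<forall>q\<in>annulus. w q \<le> ereal (\<epsilon> * E\<^sup>2))"
      then obtain \<zeta>1 where \<zeta>1: "\<zeta>1 \<in> annulus" "ereal (\<epsilon> * E\<^sup>2) < w \<zeta>1" by (auto simp: not_le)
      obtain c where c: "ereal (\<epsilon> * E\<^sup>2) < ereal c" "ereal c < w \<zeta>1"
        using ereal_dense2[OF \<zeta>1(2)] by blast
      define \<eta> where "\<eta> = (c - \<epsilon> * E\<^sup>2) / 3"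
      have \<eta>pos: "\<eta> > 0" using c(1) unfolding \<eta>_def by simp
      have gcont: "isCont g q" if "q \<noteq> 0" for q
        unfolding g_def h_def using that by (intro continuous_intros) auto
      have ann0: "q \<noteq> 0" if "q \<in> annulus" for q using that by (auto simp: annulus_def)
      have uscw: "usc_on annulus w"
        unfolding w_def
      proof (rule usc_add_cont[OF usc_comp[OF usc]])
        fix q assume "q \<in> annulus"
        then show "isCont (Pair z) q \<and> (z, q) \<in> D \<times> annulus" using z by (auto intro: continuous_intros)
      next
        fix q assume "q \<in> annulus"
        then show "isCont g q" using gcont ann0 by blast
      qed
      have "\<exists>l\<in>annulus. \<forall>p\<in>annulus. w p \<le> w l"
      proof (rule usc_max_closure[of "cball 0 E - ball 0 1" annulus \<zeta>1 "ereal c" w])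
        show "compact (cball 0 E - ball (0::complex) 1)"
          by (intro compact_diff compact_cball open_ball)
        show "annulus \<subseteq> cball 0 E - ball 0 1"
          by (auto simp: annulus_def E_def)
        show "\<zeta>1 \<in> annulus" "ereal c < w \<zeta>1" using \<zeta>1 c by auto
        show "\<forall>l\<in>cball 0 E - ball 0 1 - annulus. \<forall>\<^sub>F p in nhds l. p \<in> annulus \<longrightarrow> w p < ereal c"
        proof
          fix l assume l: "l \<in> cball 0 E - ball 0 1 - annulus"
          then have l01: "cmod l = 1 \<or> cmod l = E" by (auto simp: annulus_def E_def)
          have lnot: "l \<notin> annulus" using l by simp
          have l0: "l \<noteq> 0" using l01 E1 by auto
          show "\<forall>\<^sub>F p in nhds l. p \<in> annulus \<longrightarrow> w p < ereal c"
          proof (cases "cmod l = 1")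
            case True
            have e1: "eventually (\<lambda>p. p \<in> annulus \<longrightarrow> U (z, p) < ereal (A + \<eta>)) (nhds l)"
              using boundary_ev[OF lim0[rule_format, OF True] lnot z \<eta>pos] .
            have e2: "eventually (\<lambda>p. g p < g l + \<eta>) (nhds l)"
              using cont_ev_less[OF gcont[OF l0]] \<eta>pos by simp
            have gl: "g l = \<epsilon> - A" unfolding g_def h_def using True by simp
            have "\<epsilon> \<le> \<epsilon> * E\<^sup>2" using \<epsilon>pos E1 by (simp add: less_1_mult power2_eq_square less_imp_le)
            moreover have "\<epsilon> * E\<^sup>2 < c" using c(1) by simp
            ultimately have cc: "A + \<eta> + (g l + \<eta>) \<le> c" unfolding gl \<eta>_def by (simp add: field_simps)
            show ?thesis using e1 e2
            proof eventually_elim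
              case (elim p)
              show ?case
              proof
                assume "p \<in> annulus"
                then have "w p < ereal (A + \<eta> + (g l + \<eta>))"
                  unfolding w_def using elim by (intro ereal_add_lt_aux) auto
                then show "w p < ereal c" using cc by (meson ereal_less_eq(3) less_le_trans)
              qed
            qed
          next
            case False
            then have lE: "cmod l = E" using l01 by simp
            have e1: "eventually (\<lambda>p. p \<in> annulus \<longrightarrow> U (z, p) < ereal (B + \<eta>)) (nhds l)"
              using boundary_ev[OF lim1[rule_format, OF lE] lnot z \<eta>pos] .
            have e2: "eventually (\<lambda>p. g p < g l + \<eta>) (nhds l)"
              using cont_ev_less[OF gcont[OF l0]] \<eta>pos by simp
            have gl: "g l = \<epsilon> * E\<^sup>2 - B" unfolding g_def h_def using lE by (simp add: E_def)
            have "\<epsilon> * E\<^sup>2 < c" using c(1) by simp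
            then have cc: "B + \<eta> + (g l + \<eta>) \<le> c" unfolding gl \<eta>_def by (simp add: field_simps)
            show ?thesis using e1 e2
            proof eventually_elim
              case (elim p)
              show ?case
              proof
                assume "p \<in> annulus"
                then have "w p < ereal (B + \<eta> + (g l + \<eta>))"
                  unfolding w_def using elim by (intro ereal_add_lt_aux) auto
                then show "w p < ereal c" using cc by (meson ereal_less_eq(3) less_le_trans)
              qed
            qed
          qed
        qed
        show "\<forall>l\<in>annulus. \<forall>y. w l < y \<longrightarrow> (\<forall>\<^sub>F p in nhds l. p \<in> annulus \<longrightarrow> w p < y)"
          using usc_onD[OF uscw] by blast
      qed
      then obtain l where l: "l \<in> annulus" and lmax: "\<forall>p\<in>annulus. w p \<le> w l" by blast
      have "w \<zeta>1 \<le> w l" using lmax \<zeta>1 by blast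
      then have wl_low: "ereal c < w l" using c by simp
      have "U (z, l) < \<infinity>" using fin l z by blast
      then have "w l < \<infinity>" unfolding w_def by simp
      then obtain Sr where Sr: "w l = ereal Sr" using wl_low by (cases "w l") auto
      have Uzl: "U (z, l) = ereal (Sr - g l)" using Sr unfolding w_def by (cases "U (z, l)") auto
      define \<rho> where "\<rho> = min (cmod l - 1) (E - cmod l) / 2"
      have lb: "1 < cmod l" "cmod l < E" using l by (auto simp: annulus_def E_def)
      have \<rho>pos: "\<rho> > 0" using lb unfolding \<rho>_def by simp
      have \<rho>a: "\<rho> \<le> (cmod l - 1) / 2" "\<rho> \<le> (E - cmod l) / 2" unfolding \<rho>_def by (simp_all add: divide_right_mono)
      have \<rho>1a: "1 < cmod l - \<rho>" using lb \<rho>a by (simp add: field_simps)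
      have \<rho>1b: "cmod l + \<rho> < E" using lb \<rho>a by (simp add: field_simps)
      note \<rho>1 = \<rho>1a \<rho>1b
      have inann: "l + c' * complex_of_real \<rho> \<in> annulus" if "cmod c' \<le> 1" for c'
      proof -
        have n: "cmod (c' * complex_of_real \<rho>) \<le> \<rho>"
          using that \<rho>pos by (simp add: norm_mult mult_left_le_one_le)
        have "cmod (l + c' * complex_of_real \<rho>) \<le> cmod l + cmod (c' * complex_of_real \<rho>)"
          by (rule norm_triangle_ineq)
        moreover have "cmod l - cmod (c' * complex_of_real \<rho>) \<le> cmod (l + c' * complex_of_real \<rho>)"
          by (metis norm_diff_ineq norm_minus_cancel diff_minus_eq_add)
        ultimately show ?thesis using n \<rho>1 by (auto simp: annulus_def E_def)
      qed
      have disc: "\<forall>c'. cmod c' \<le> 1 \<longrightarrow> (z, l) + cmul_pair c' (0, complex_of_real \<rho>) \<in> D \<times> annulus"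
        using inann z by (simp add: cmul_pair_circle)
      define G where "G t = Sr + A - \<epsilon> * (cmod (l + cis t * complex_of_real \<rho>))\<^sup>2
          + (B - A) * ln (cmod (l + cis t * complex_of_real \<rho>))" for t
      define I where "I = 2*pi*(Sr + A) - \<epsilon> * (2*pi*((cmod l)\<^sup>2 + \<rho>\<^sup>2)) + (B - A) * (2*pi*ln (cmod l))"
      have GI: "(G has_integral I) {0..2*pi}"
      proof -
        have c1: "((\<lambda>t. Sr + A) has_integral 2*pi*(Sr + A)) {0..2*pi}"
          using has_integral_const_real[of "Sr + A" 0 "2*pi"] by simp
        have ml: "cmod (complex_of_real \<rho>) < cmod l" using \<rho>pos \<rho>1 by simp
        show ?thesis unfolding G_def I_def
          by (rule has_integral_add[OF has_integral_diff[OF c1 has_integral_mult_right[OF mean_sq]] has_integral_mult_right[OF mean_log[OF ml]]])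
      qed
      have le: "\<forall>t. U ((z, l) + cmul_pair (cis t) (0, complex_of_real \<rho>)) \<le> ereal (G t)"
      proof
        fix t
        let ?q = "l + cis t * complex_of_real \<rho>"
        have qa: "?q \<in> annulus" using inann[of "cis t"] by simp
        have "w ?q \<le> ereal Sr" using lmax qa Sr by metis
        then have "U (z, ?q) \<le> ereal (Sr - g ?q)" unfolding w_def by (rule ereal_add_le_aux)
        moreover have "Sr - g ?q = G t" unfolding g_def h_def G_def by (simp add: algebra_simps)
        ultimately show "U ((z, l) + cmul_pair (cis t) (0, complex_of_real \<rho>)) \<le> ereal (G t)"
          by (simp add: cmul_pair_circle)
      qed
      have GM: "\<forall>t. G t \<le> Sr + \<bar>A\<bar> + \<bar>B\<bar>"
      proof
        fix t
        let ?q = "l + cis t * complex_of_real \<rho>"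
        have qa: "?q \<in> annulus" using inann[of "cis t"] by simp
        then have q1: "cmod ?q < exp 1" "1 < cmod ?q" by (auto simp: annulus_def)
        then have s1: "ln (cmod ?q) \<le> 1" 
        proof -
          have "?q \<noteq> 0" using q1 by auto
          then show ?thesis using ln_less_cancel_iff[of "cmod ?q" "exp 1"] q1 by (simp add: less_imp_le)
        qed
        have s0: "0 \<le> ln (cmod ?q)" using q1 by (simp add: less_imp_le)
        have "A * (1 - ln (cmod ?q)) \<le> \<bar>A\<bar>"
        proof -
          have "A * (1 - ln (cmod ?q)) \<le> \<bar>A\<bar> * (1 - ln (cmod ?q))" using s1 by (intro mult_right_mono) auto
          also have "\<dots> \<le> \<bar>A\<bar>" using s0 s1 by (intro mult_left_le) auto
          finally show ?thesis .
        qed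
        moreover have "B * ln (cmod ?q) \<le> \<bar>B\<bar>"
        proof -
          have "B * ln (cmod ?q) \<le> \<bar>B\<bar> * ln (cmod ?q)" using s0 by (intro mult_right_mono) auto
          also have "\<dots> \<le> \<bar>B\<bar>" using s0 s1 by (intro mult_left_le) auto
          finally show ?thesis .
        qed
        moreover have "0 \<le> \<epsilon> * (cmod ?q)\<^sup>2" using \<epsilon>pos by simp
        ultimately show "G t \<le> Sr + \<bar>A\<bar> + \<bar>B\<bar>" unfolding G_def by (simp add: algebra_simps)
      qed
      have "U (z, l) \<le> ereal (I / (2*pi))"
        using psh_mean_le[OF psh disc GI le GM] by simp
      then have "Sr - g l \<le> I / (2*pi)" using Uzl by simp
      also have "I / (2*pi) = Sr + A - \<epsilon> * ((cmod l)\<^sup>2 + \<rho>\<^sup>2) + (B - A) * ln (cmod l)"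
        unfolding I_def by (simp add: field_simps)
      finally have "\<epsilon> * \<rho>\<^sup>2 \<le> 0" unfolding g_def h_def by (simp add: algebra_simps)
      moreover have "\<epsilon> * \<rho>\<^sup>2 > 0" using \<epsilon>pos \<rho>pos by simp
      ultimately show False by simp
    qed
    then have "w \<zeta> \<le> ereal (\<epsilon> * E\<^sup>2)" using \<zeta> by blast
    then have "U (z, \<zeta>) \<le> ereal (\<epsilon> * E\<^sup>2 - g \<zeta>)" unfolding w_def by (rule ereal_add_le_aux)
    also have "\<epsilon> * E\<^sup>2 - g \<zeta> \<le> h \<zeta> + e" unfolding g_def using \<epsilon>E \<epsilon>pos by simp
    finally show ?thesis by simp
  qed
  have "U (z, \<zeta>) \<le> ereal (h \<zeta>)"
  proof (rule ereal_le_epsilon2)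
    fix e :: real assume "0 < e"
    then show "U (z, \<zeta>) \<le> ereal (h \<zeta>) + ereal e" using key by simp
  qed
  then show ?thesis unfolding h_def A_def B_def .
qed



lemma path_cont_vec: "continuous_on UNIV (\<lambda>t. (a::complex^'n) + cis t *s b)"
  unfolding vector_scalar_mult_def by (intro continuous_intros)

lemma path_cont_pair: "continuous_on UNIV (\<lambda>t. (a::(complex^'n) \<times> complex) + cmul_pair (cis t) b)"
proof -
  have eq: "(\<lambda>t. a + cmul_pair (cis t) b) = (\<lambda>t. (fst a + cis t *s fst b, snd a + cis t * snd b))"
    by (cases a) (simp add: cmul_pair_def fun_eq_iff)
  show ?thesis unfolding eq
    by (intro continuous_on_Pair path_cont_vec) (intro continuous_intros)
qed

lemma usc_bounded_integrable:
  assumes usc: "usc_on \<Omega> (\<lambda>p. ereal (F p))" and cont: "continuous_on UNIV \<gamma>"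
    and inn: "\<And>t. \<gamma> t \<in> \<Omega>" and bd: "\<And>p. p \<in> \<Omega> \<Longrightarrow> \<bar>F p\<bar> \<le> B"
  shows "(\<lambda>t. F (\<gamma> t)) integrable_on {0..2*pi}"
proof -
  have "(\<lambda>t::real. ereal (F (\<gamma> t))) \<in> borel_measurable borel"
    by (rule usc_path_borel[OF usc cont inn])
  then have m: "(\<lambda>t. F (\<gamma> t)) \<in> borel_measurable borel" by simp
  then have m': "(\<lambda>t. F (\<gamma> t)) \<in> borel_measurable (lebesgue_on {0..2*pi})"
  proof -
    have "(\<lambda>t. F (\<gamma> t)) \<in> borel_measurable lborel" using m by simp
    then have "(\<lambda>t. F (\<gamma> t)) \<in> borel_measurable lebesgue" by (rule measurable_completion)
    then show ?thesis by (rule measurable_restrict_space1)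
  qed
  show ?thesis
    by (rule measurable_bounded_by_integrable_imp_integrable[OF m' integrable_const_ivl[of B 0 "2*pi"]])
       (use bd inn in auto)
qed

lemma psh_avg:
  fixes D :: "(complex^'n) set"
  assumes psh: "psh D (\<lambda>z. ereal (u z))" and bd: "\<forall>z\<in>D. \<bar>u z\<bar> \<le> B"
    and disc: "\<forall>\<zeta>. cmod \<zeta> \<le> 1 \<longrightarrow> a + \<zeta> *s b \<in> D"
  shows "(\<lambda>t. u (a + cis t *s b)) integrable_on {0..2*pi}"
    and "u a \<le> integral {0..2*pi} (\<lambda>t. u (a + cis t *s b)) / (2*pi)"
proof -
  have usc: "usc_on D (\<lambda>z. ereal (u z))" using psh unfolding psh_gen_def by auto
  have inn: "\<And>t. a + cis t *s b \<in> D" using disc by simp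
  show int: "(\<lambda>t. u (a + cis t *s b)) integrable_on {0..2*pi}"
    by (rule usc_bounded_integrable[OF usc path_cont_vec inn]) (use bd in auto)
  have "ereal (u a) \<le> ereal (integral {0..2*pi} (\<lambda>t. u (a + cis t *s b)) / (2*pi))"
    by (rule psh_mean_le[OF psh disc integrable_integral[OF int], of B]) (use bd inn in \<open>auto simp: abs_le_iff\<close>)
  then show "u a \<le> integral {0..2*pi} (\<lambda>t. u (a + cis t *s b)) / (2*pi)" by simp
qed

lemma limsup_from_ev:
  assumes "\<And>\<eta>. \<eta> > 0 \<Longrightarrow> eventually (\<lambda>p. p \<in> S \<longrightarrow> F p < ereal (c + \<eta>)) (nhds x)"
  shows "Limsup (at x within S) F \<le> ereal c"
  unfolding Limsup_le_iff
proof (intro allI impI)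
  fix y assume y: "ereal c < y"
  have "eventually (\<lambda>p. p \<in> S \<longrightarrow> F p < y) (nhds x)"
  proof (cases y)
    case (real r)
    then have "r - c > 0" using y by simp
    from assms[OF this] show ?thesis by eventually_elim (auto simp: real)
  next
    case PInf
    have "eventually (\<lambda>p. p \<in> S \<longrightarrow> F p < ereal (c + 1)) (nhds x)" using assms[of 1] by simp
    then show ?thesis by eventually_elim (auto simp: PInf)
  next
    case MInf then show ?thesis using y by simp
  qed
  then have "eventually (\<lambda>p. p \<noteq> x \<longrightarrow> p \<in> S \<longrightarrow> F p < y) (nhds x)"
    by eventually_elim auto
  then show "eventually (\<lambda>p. y > F p) (at x within S)"
    by (simp add: eventually_at_filter)
qed

lemma usc_fst_ev:
  assumes usc: "usc_on D (\<lambda>z. ereal (u z))" and z: "z \<in> D" and "\<eta> > 0"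
  shows "eventually (\<lambda>p. fst p \<in> D \<longrightarrow> u (fst p) < u z + \<eta>) (nhds (z, \<zeta>0))"
proof -
  have "eventually (\<lambda>q. q \<in> D \<longrightarrow> ereal (u q) < ereal (u z + \<eta>)) (nhds z)"
    using usc_onD[OF usc z, of "ereal (u z + \<eta>)"] \<open>\<eta> > 0\<close> by simp
  moreover have "filterlim fst (nhds z) (nhds (z, \<zeta>0))"
    using tendsto_fst[OF filterlim_ident, of "(z, \<zeta>0)"] by simp
  ultimately show ?thesis
    by (rule eventually_compose_filterlim[where f=fst, THEN eventually_mono]) simp
qed



lemma disc_split:
  assumes "\<forall>\<zeta>. cmod \<zeta> \<le> 1 \<longrightarrow> (a1, a2) + cmul_pair \<zeta> (b1, b2) \<in> D \<times> annulus"
  shows "\<forall>\<zeta>. cmod \<zeta> \<le> 1 \<longrightarrow> a1 + \<zeta> *s b1 \<in> D"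
    and "\<forall>\<zeta>. cmod \<zeta> \<le> 1 \<longrightarrow> a2 + \<zeta> * b2 \<in> annulus"
  using assms by (auto simp: cmul_pair_def)

lemma E0_facts:
  assumes "u \<in> E0 D"
  shows "psh D (\<lambda>z. ereal (u z))" "usc_on D (\<lambda>z. ereal (u z))" "open D"
    "\<exists>B. \<forall>z\<in>D. \<bar>u z\<bar> \<le> B"
  using assms unfolding E0_def psh_gen_def
  by (auto simp: bounded_iff)

lemma Usum_in_W:
  fixes D :: "(complex^'n) set"
  assumes bD: "bounded D" and u0: "u0 \<in> E0 D" and u1: "u1 \<in> E0 D"
  shows "(\<lambda>p. ereal (u0 (fst p) + u1 (fst p))) \<in> W D u0 u1"
proof -
  note f0 = E0_facts[OF u0] and f1 = E0_facts[OF u1]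
  obtain B0 where B0: "\<forall>z\<in>D. \<bar>u0 z\<bar> \<le> B0" using f0(4) by blast
  obtain B1 where B1: "\<forall>z\<in>D. \<bar>u1 z\<bar> \<le> B1" using f1(4) by blast
  have np0: "\<And>z. z \<in> D \<Longrightarrow> u0 z \<le> 0" using E0_nonpos[OF bD u0] by blast
  have np1: "\<And>z. z \<in> D \<Longrightarrow> u1 z \<le> 0" using E0_nonpos[OF bD u1] by blast
  have fstD: "\<And>x. x \<in> D \<times> annulus \<Longrightarrow> isCont fst x \<and> fst x \<in> D" by auto
  have psh2: "psh2 (D \<times> annulus) (\<lambda>p. ereal (u0 (fst p) + u1 (fst p)))"
    unfolding psh_gen_def
  proof (intro conjI allI impI ballI)
    show "open (D \<times> annulus)" using f0(3) open_annulus by (rule open_Times)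
    show "usc_on (D \<times> annulus) (\<lambda>p. ereal (u0 (fst p) + u1 (fst p)))"
      by (rule usc_add_real[OF usc_comp[OF f0(2) fstD] usc_comp[OF f1(2) fstD]])
    show "\<And>x. ereal (u0 (fst x) + u1 (fst x)) < \<infinity>" by simp
  next
    fix a b :: "(complex^'n) \<times> complex" and M :: real
    assume disc: "\<forall>\<zeta>. cmod \<zeta> \<le> 1 \<longrightarrow> a + cmul_pair \<zeta> b \<in> D \<times> annulus"
      and Mb: "\<forall>t. ereal (u0 (fst (a + cmul_pair (cis t) b)) + u1 (fst (a + cmul_pair (cis t) b))) \<le> ereal M"
    obtain a1 a2 where a: "a = (a1, a2)" by (cases a)
    obtain b1 b2 where b: "b = (b1, b2)" by (cases b)
    have d1: "\<forall>\<zeta>. cmod \<zeta> \<le> 1 \<longrightarrow> a1 + \<zeta> *s b1 \<in> D" using disc_split(1) disc a b by blast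
    note i0 = psh_avg[OF f0(1) B0 d1] and i1 = psh_avg[OF f1(1) B1 d1]
    define \<phi>0 where "\<phi>0 t = u0 (a1 + cis t *s b1)" for t
    define \<phi>1 where "\<phi>1 t = u1 (a1 + cis t *s b1)" for t
    have I: "((\<lambda>t. \<phi>0 t + \<phi>1 t) has_integral (integral {0..2*pi} \<phi>0 + integral {0..2*pi} \<phi>1)) {0..2*pi}"
      unfolding \<phi>0_def \<phi>1_def by (intro has_integral_add integrable_integral i0(1) i1(1))
    have "circle_mean cmul_pair (\<lambda>p. ereal (u0 (fst p) + u1 (fst p))) a b M
        = ereal ((integral {0..2*pi} \<phi>0 + integral {0..2*pi} \<phi>1) / (2*pi))"
    proof (rule circle_mean_eq[OF I])
      show "\<forall>t\<in>{0..2*pi}. ereal (u0 (fst (a + cmul_pair (cis t) b)) + u1 (fst (a + cmul_pair (cis t) b))) = ereal (\<phi>0 t + \<phi>1 t)"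
        by (simp add: a b cmul_pair_def \<phi>0_def \<phi>1_def)
      show "\<forall>t\<in>{0..2*pi}. \<phi>0 t + \<phi>1 t \<le> M"
        using Mb by (simp add: a b cmul_pair_def \<phi>0_def \<phi>1_def)
    qed
    moreover have "u0 a1 + u1 a1 \<le> (integral {0..2*pi} \<phi>0 + integral {0..2*pi} \<phi>1) / (2*pi)"
      using i0(2) i1(2) unfolding \<phi>0_def \<phi>1_def by (simp add: add_divide_distrib)
    ultimately show "ereal (u0 (fst a) + u1 (fst a)) \<le> circle_mean cmul_pair (\<lambda>p. ereal (u0 (fst p) + u1 (fst p))) a b M"
      by (simp add: a)
  qed
  show ?thesis
    unfolding W_def
  proof (intro CollectI conjI ballI allI impI)
    show "psh2 (D \<times> annulus) (\<lambda>p. ereal (u0 (fst p) + u1 (fst p)))" by (rule psh2)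
    fix p assume "p \<in> D \<times> annulus"
    then show "ereal (u0 (fst p) + u1 (fst p)) \<le> 0" using np0 np1 by force
  next
    fix z \<zeta>0 assume z: "z \<in> D" and "cmod \<zeta>0 = 1"
    show "Limsup (at (z, \<zeta>0) within D \<times> annulus) (\<lambda>p. ereal (u0 (fst p) + u1 (fst p))) \<le> ereal (u0 z)"
    proof (rule limsup_from_ev)
      fix \<eta> :: real assume "\<eta> > 0"
      from usc_fst_ev[OF f0(2) z this, of \<zeta>0]
      show "eventually (\<lambda>p. p \<in> D \<times> annulus \<longrightarrow> ereal (u0 (fst p) + u1 (fst p)) < ereal (u0 z + \<eta>)) (nhds (z, \<zeta>0))"
        by eventually_elim (use np1 in force)
    qed
  next
    fix z \<zeta>0 assume z: "z \<in> D" and "cmod \<zeta>0 = exp 1"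
    show "Limsup (at (z, \<zeta>0) within D \<times> annulus) (\<lambda>p. ereal (u0 (fst p) + u1 (fst p))) \<le> ereal (u1 z)"
    proof (rule limsup_from_ev)
      fix \<eta> :: real assume "\<eta> > 0"
      from usc_fst_ev[OF f1(2) z this, of \<zeta>0]
      show "eventually (\<lambda>p. p \<in> D \<times> annulus \<longrightarrow> ereal (u0 (fst p) + u1 (fst p)) < ereal (u1 z + \<eta>)) (nhds (z, \<zeta>0))"
        by eventually_elim (use np0 in force)
    qed
  qed
qed

lemma disc_mod:
  assumes d2: "\<forall>\<zeta>. cmod \<zeta> \<le> 1 \<longrightarrow> a2 + \<zeta> * b2 \<in> annulus"
  shows "cmod b2 < cmod a2"
proof (rule ccontr)
  assume "\<not> cmod b2 < cmod a2"
  then have le: "cmod a2 \<le> cmod b2" by simp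
  have "a2 \<in> annulus" using d2[rule_format, of 0] by simp
  then have "cmod a2 > 1" by (simp add: annulus_def)
  then have b0: "b2 \<noteq> 0" using le by auto
  define \<zeta> where "\<zeta> = - a2 / b2"
  have "cmod \<zeta> \<le> 1" unfolding \<zeta>_def using le b0 by (simp add: norm_divide divide_le_eq_1)
  then have "a2 + \<zeta> * b2 \<in> annulus" using d2 by blast
  moreover have "a2 + \<zeta> * b2 = 0" unfolding \<zeta>_def using b0 by simp
  ultimately show False by (simp add: annulus_def)
qed

lemma V_in_W:
  fixes D :: "(complex^'n) set"
  assumes bD: "bounded D" and u0: "u0 \<in> E0 D" and u1: "u1 \<in> E0 D"
    and M0: "\<forall>z\<in>D. \<bar>u0 z\<bar> \<le> M0" and M1: "\<forall>z\<in>D. \<bar>u1 z\<bar> \<le> M1"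
  shows "(\<lambda>p. ereal (max (u0 (fst p) - M1 * ln (cmod (snd p))) (u1 (fst p) - M0 * (1 - ln (cmod (snd p)))))) \<in> W D u0 u1"
proof -
  define Vr where "Vr p = max (u0 (fst p) - M1 * ln (cmod (snd p))) (u1 (fst p) - M0 * (1 - ln (cmod (snd p))))"
    for p :: "(complex^'n) \<times> complex"
  note f0 = E0_facts[OF u0] and f1 = E0_facts[OF u1]
  have np0: "\<And>z. z \<in> D \<Longrightarrow> u0 z \<le> 0" using E0_nonpos[OF bD u0] by blast
  have np1: "\<And>z. z \<in> D \<Longrightarrow> u1 z \<le> 0" using E0_nonpos[OF bD u1] by blast
  have fstD: "\<And>x. x \<in> D \<times> annulus \<Longrightarrow> isCont fst x \<and> fst x \<in> D" by auto
  have ann: "\<And>q. q \<in> annulus \<Longrightarrow> 0 < ln (cmod q) \<and> ln (cmod q) < 1"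
  proof -
    fix q :: complex assume "q \<in> annulus"
    then have q1: "1 < cmod q" "cmod q < exp 1" by (auto simp: annulus_def)
    then have "q \<noteq> 0" by auto
    then show "0 < ln (cmod q) \<and> ln (cmod q) < 1"
      using q1 ln_less_cancel_iff[of "cmod q" "exp 1"] by simp
  qed
  have M0pos: "\<And>p. p \<in> D \<times> annulus \<Longrightarrow> 0 \<le> M0" using M0 by force
  have M1pos: "\<And>p. p \<in> D \<times> annulus \<Longrightarrow> 0 \<le> M1" using M1 by force
  have Vbd: "\<bar>Vr p\<bar> \<le> 2 * (M0 + M1)" if p: "p \<in> D \<times> annulus" for p
  proof -
    obtain z q where pz: "p = (z, q)" "z \<in> D" "q \<in> annulus" using p by auto
    have L: "0 < ln (cmod q)" "ln (cmod q) < 1" using ann[OF pz(3)] by auto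
    have a0: "\<bar>u0 z\<bar> \<le> M0" and a1: "\<bar>u1 z\<bar> \<le> M1" using M0 M1 pz by auto
    have m0: "0 \<le> M0" and m1: "0 \<le> M1" using M0pos M1pos p by auto
    have "\<bar>M1 * ln (cmod q)\<bar> \<le> M1" using L m1 by (simp add: abs_mult mult_left_le)
    moreover have "\<bar>M0 * (1 - ln (cmod q))\<bar> \<le> M0" using L m0 by (simp add: abs_mult mult_left_le)
    ultimately show ?thesis unfolding Vr_def pz using a0 a1 m0 m1 by (auto simp: abs_le_iff max_def)
  qed
  have usc: "usc_on (D \<times> annulus) (\<lambda>p. ereal (Vr p))"
  proof -
    have eq: "(\<lambda>p. ereal (Vr p)) = (\<lambda>p. max (ereal (u0 (fst p)) + ereal (- M1 * ln (cmod (snd p))))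
          (ereal (u1 (fst p)) + ereal (- M0 * (1 - ln (cmod (snd p))))))"
      by (simp add: Vr_def fun_eq_iff)
    have c: "isCont (\<lambda>p. - M1 * ln (cmod (snd p))) x" "isCont (\<lambda>p. - M0 * (1 - ln (cmod (snd p)))) x"
      if "x \<in> D \<times> annulus" for x
    proof -
      have "snd x \<noteq> 0" using that by (auto simp: annulus_def)
      then show "isCont (\<lambda>p. - M1 * ln (cmod (snd p))) x" "isCont (\<lambda>p. - M0 * (1 - ln (cmod (snd p)))) x"
        by (auto intro!: continuous_intros)
    qed
    show ?thesis unfolding eq
      by (intro usc_max usc_add_cont[OF usc_comp[OF f0(2) fstD]] usc_add_cont[OF usc_comp[OF f1(2) fstD]] c)
  qed
  have psh2: "psh2 (D \<times> annulus) (\<lambda>p. ereal (Vr p))"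
    unfolding psh_gen_def
  proof (intro conjI allI impI ballI)
    show "open (D \<times> annulus)" using f0(3) open_annulus by (rule open_Times)
    show "usc_on (D \<times> annulus) (\<lambda>p. ereal (Vr p))" by (rule usc)
    show "\<And>x. ereal (Vr x) < \<infinity>" by simp
  next
    fix a b :: "(complex^'n) \<times> complex" and M :: real
    assume disc: "\<forall>\<zeta>. cmod \<zeta> \<le> 1 \<longrightarrow> a + cmul_pair \<zeta> b \<in> D \<times> annulus"
      and Mb: "\<forall>t. ereal (Vr (a + cmul_pair (cis t) b)) \<le> ereal M"
    obtain a1 a2 where a: "a = (a1, a2)" by (cases a)
    obtain b1 b2 where b: "b = (b1, b2)" by (cases b)
    have d1: "\<forall>\<zeta>. cmod \<zeta> \<le> 1 \<longrightarrow> a1 + \<zeta> *s b1 \<in> D" using disc_split(1) disc a b by blast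
    have d2: "\<forall>\<zeta>. cmod \<zeta> \<le> 1 \<longrightarrow> a2 + \<zeta> * b2 \<in> annulus" using disc_split(2) disc a b by blast
    have inn: "\<And>t. a + cmul_pair (cis t) b \<in> D \<times> annulus" using disc by simp
    have pa: "a \<in> D \<times> annulus" using disc[rule_format, of 0] by (simp add: cmul_pair_def flip: zero_prod_def)
    have m0: "0 \<le> M0" and m1: "0 \<le> M1" using M0pos M1pos pa by auto
    obtain B0 where B0: "\<forall>z\<in>D. \<bar>u0 z\<bar> \<le> B0" using f0(4) by blast
    obtain B1 where B1: "\<forall>z\<in>D. \<bar>u1 z\<bar> \<le> B1" using f1(4) by blast
    note i0 = psh_avg[OF f0(1) B0 d1] and i1 = psh_avg[OF f1(1) B1 d1]
    define \<phi>0 where "\<phi>0 t = u0 (a1 + cis t *s b1)" for t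
    define \<phi>1 where "\<phi>1 t = u1 (a1 + cis t *s b1)" for t
    define L where "L t = ln (cmod (a2 + cis t * b2))" for t
    define \<psi> where "\<psi> t = Vr (a + cmul_pair (cis t) b)" for t
    have \<psi>eq: "\<psi> t = max (\<phi>0 t - M1 * L t) (\<phi>1 t - M0 * (1 - L t))" for t
      by (simp add: \<psi>_def Vr_def a b cmul_pair_def \<phi>0_def \<phi>1_def L_def)
    have LI: "(L has_integral 2*pi*ln (cmod a2)) {0..2*pi}"
      unfolding L_def using mean_log[OF disc_mod[OF d2]] .
    have \<psi>int: "\<psi> integrable_on {0..2*pi}"
      unfolding \<psi>_def by (rule usc_bounded_integrable[OF usc path_cont_pair inn Vbd])
    have cm: "circle_mean cmul_pair (\<lambda>p. ereal (Vr p)) a b M = ereal (integral {0..2*pi} \<psi> / (2*pi))"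
      by (rule circle_mean_eq[OF integrable_integral[OF \<psi>int]]) (use Mb in \<open>auto simp: \<psi>_def\<close>)
    have int0: "((\<lambda>t. \<phi>0 t - M1 * L t) has_integral (integral {0..2*pi} \<phi>0 - M1 * (2*pi*ln (cmod a2)))) {0..2*pi}"
      unfolding \<phi>0_def by (intro has_integral_diff integrable_integral i0(1) has_integral_mult_right LI)
    have int1: "((\<lambda>t. \<phi>1 t - M0 * (1 - L t)) has_integral (integral {0..2*pi} \<phi>1 - M0 * (2*pi - 2*pi*ln (cmod a2)))) {0..2*pi}"
    proof -
      have c1: "((\<lambda>t. 1::real) has_integral 2*pi) {0..2*pi}" using has_integral_const_real[of "1::real" 0 "2*pi"] by simp
      show ?thesis
        unfolding \<phi>1_def by (intro has_integral_diff integrable_integral i1(1) has_integral_mult_right c1 LI)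
    qed
    have le0: "integral {0..2*pi} \<phi>0 - M1 * (2*pi*ln (cmod a2)) \<le> integral {0..2*pi} \<psi>"
      by (rule has_integral_le[OF int0 integrable_integral[OF \<psi>int]]) (simp add: \<psi>eq)
    have le1: "integral {0..2*pi} \<phi>1 - M0 * (2*pi - 2*pi*ln (cmod a2)) \<le> integral {0..2*pi} \<psi>"
      by (rule has_integral_le[OF int1 integrable_integral[OF \<psi>int]]) (simp add: \<psi>eq)
    have A0: "2*pi*u0 a1 \<le> integral {0..2*pi} \<phi>0" using i0(2) unfolding \<phi>0_def by (simp add: field_simps)
    have A1: "2*pi*u1 a1 \<le> integral {0..2*pi} \<phi>1" using i1(2) unfolding \<phi>1_def by (simp add: field_simps)
    have "2*pi * (u0 a1 - M1 * ln (cmod a2)) \<le> integral {0..2*pi} \<psi>" using le0 A0 by (simp add: algebra_simps)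
    moreover have "2*pi * (u1 a1 - M0 * (1 - ln (cmod a2))) \<le> integral {0..2*pi} \<psi>" using le1 A1 by (simp add: algebra_simps)
    ultimately have "2*pi * Vr a \<le> integral {0..2*pi} \<psi>" unfolding Vr_def a by simp
    then have "Vr a \<le> integral {0..2*pi} \<psi> / (2*pi)" by (simp add: field_simps)
    then show "ereal (Vr a) \<le> circle_mean cmul_pair (\<lambda>p. ereal (Vr p)) a b M" unfolding cm by simp
  qed
  have "(\<lambda>p. ereal (Vr p)) \<in> W D u0 u1"
    unfolding W_def
  proof (intro CollectI conjI ballI allI impI)
    show "psh2 (D \<times> annulus) (\<lambda>p. ereal (Vr p))" by (rule psh2)
    fix p assume p: "p \<in> D \<times> annulus"
    then obtain z q where pz: "p = (z, q)" "z \<in> D" "q \<in> annulus" by auto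
    have L: "0 < ln (cmod q)" "ln (cmod q) < 1" using ann[OF pz(3)] by auto
    have "0 \<le> M0" "0 \<le> M1" using M0pos M1pos p by auto
    moreover have "u0 z \<le> 0" "u1 z \<le> 0" using np0 np1 pz by auto
    ultimately have "u0 z \<le> M1 * ln (cmod q)" "u1 z \<le> M0 * (1 - ln (cmod q))"
      using L by (auto intro: order_trans[OF _ mult_nonneg_nonneg])
    then show "ereal (Vr p) \<le> 0" unfolding Vr_def pz by simp
  next
    fix z \<zeta>0 assume z: "z \<in> D" and z0: "cmod \<zeta>0 = 1"
    have m0: "0 \<le> M0" "- M0 \<le> u0 z" using M0 z by (auto simp: abs_le_iff)
    show "Limsup (at (z, \<zeta>0) within D \<times> annulus) (\<lambda>p. ereal (Vr p)) \<le> ereal (u0 z)"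
    proof (rule limsup_from_ev)
      fix \<eta> :: real assume \<eta>: "\<eta> > 0"
      have e1: "eventually (\<lambda>p. fst p \<in> D \<longrightarrow> u0 (fst p) < u0 z + \<eta>) (nhds (z, \<zeta>0))"
        by (rule usc_fst_ev[OF f0(2) z \<eta>])
      have "\<zeta>0 \<noteq> 0" using z0 by auto
      then have "isCont (\<lambda>p. M0 * ln (cmod (snd p))) (z, \<zeta>0)" by (auto intro!: continuous_intros)
      then have e2: "eventually (\<lambda>p. M0 * ln (cmod (snd p)) < \<eta>) (nhds (z, \<zeta>0))"
        by (rule cont_ev_less) (use z0 \<eta> in simp)
      show "eventually (\<lambda>p. p \<in> D \<times> annulus \<longrightarrow> ereal (Vr p) < ereal (u0 z + \<eta>)) (nhds (z, \<zeta>0))"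
        using e1 e2
      proof eventually_elim
        case (elim p)
        show ?case
        proof
          assume p: "p \<in> D \<times> annulus"
          have L: "0 < ln (cmod (snd p))" "ln (cmod (snd p)) < 1" using ann p by auto
          have m1: "0 \<le> M1" using M1pos p by auto
          have fp: "fst p \<in> D" using p by auto
          have "0 \<le> M1 * ln (cmod (snd p))" using L m1 by simp
          then have t1: "u0 (fst p) - M1 * ln (cmod (snd p)) < u0 z + \<eta>"
            using elim fp by linarith
          have u1n: "u1 (fst p) \<le> 0" using np1 fp by blast
          have "M0 * (1 - ln (cmod (snd p))) = M0 - M0 * ln (cmod (snd p))" by (simp add: right_diff_distrib)
          then have t2: "u1 (fst p) - M0 * (1 - ln (cmod (snd p))) < u0 z + \<eta>"
            using elim u1n m0 by linarith
          show "ereal (Vr p) < ereal (u0 z + \<eta>)" unfolding Vr_def using t1 t2 by simp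
        qed
      qed
    qed
  next
    fix z \<zeta>0 assume z: "z \<in> D" and z0: "cmod \<zeta>0 = exp 1"
    have m1: "0 \<le> M1" "- M1 \<le> u1 z" using M1 z by (auto simp: abs_le_iff)
    show "Limsup (at (z, \<zeta>0) within D \<times> annulus) (\<lambda>p. ereal (Vr p)) \<le> ereal (u1 z)"
    proof (rule limsup_from_ev)
      fix \<eta> :: real assume \<eta>: "\<eta> > 0"
      have e1: "eventually (\<lambda>p. fst p \<in> D \<longrightarrow> u1 (fst p) < u1 z + \<eta>) (nhds (z, \<zeta>0))"
        by (rule usc_fst_ev[OF f1(2) z \<eta>])
      have "\<zeta>0 \<noteq> 0" using z0 by auto
      then have "isCont (\<lambda>p. M1 - M1 * ln (cmod (snd p))) (z, \<zeta>0)" by (auto intro!: continuous_intros)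
      then have e2: "eventually (\<lambda>p. M1 - M1 * ln (cmod (snd p)) < \<eta>) (nhds (z, \<zeta>0))"
        by (rule cont_ev_less) (use z0 \<eta> in simp)
      show "eventually (\<lambda>p. p \<in> D \<times> annulus \<longrightarrow> ereal (Vr p) < ereal (u1 z + \<eta>)) (nhds (z, \<zeta>0))"
        using e1 e2
      proof eventually_elim
        case (elim p)
        show ?case
        proof
          assume p: "p \<in> D \<times> annulus"
          have L: "0 < ln (cmod (snd p))" "ln (cmod (snd p)) < 1" using ann p by auto
          have m0: "0 \<le> M0" using M0pos p by auto
          have "M0 * (1 - ln (cmod (snd p))) \<ge> 0" using L m0 by simp
          have fp: "fst p \<in> D" using p by auto
          then have t2: "u1 (fst p) - M0 * (1 - ln (cmod (snd p))) < u1 z + \<eta>"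
            using elim \<open>M0 * (1 - ln (cmod (snd p))) \<ge> 0\<close> by linarith
          have u0n: "u0 (fst p) \<le> 0" using np0 fp by blast
          have "M1 - M1 * ln (cmod (snd p)) < \<eta>" using elim by simp
          then have t1: "u0 (fst p) - M1 * ln (cmod (snd p)) < u1 z + \<eta>"
            using u0n m1 by linarith
          show "ereal (Vr p) < ereal (u1 z + \<eta>)" unfolding Vr_def using t1 t2 by simp
        qed
      qed
    qed
  qed
  then show ?thesis unfolding Vr_def .
qed



lemma ereal_abs_bound:
  assumes "ereal (c + a) \<le> x" "x \<le> ereal (c + b)" "- e < a" "b < e"
  shows "\<bar>x - ereal c\<bar> < ereal e"
  using assms by (cases x) auto

lemma geodesic_bounds:
  fixes D :: "(complex^'n) set"
  assumes bD: "bounded D" and u0: "u0 \<in> E0 D" and u1: "u1 \<in> E0 D"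
    and M0: "\<forall>z\<in>D. \<bar>u0 z\<bar> \<le> M0" and M1: "\<forall>z\<in>D. \<bar>u1 z\<bar> \<le> M1"
    and t: "t \<in> {0<..<1}" and z: "z \<in> D"
  shows "geodesic D u0 u1 t z \<le> ereal ((1 - t) * u0 z + t * u1 z)"
    "ereal (max (u0 z - M1 * t) (u1 z - M0 * (1 - t))) \<le> geodesic D u0 u1 t z"
    "ereal (u0 z + u1 z) \<le> geodesic D u0 u1 t z"
proof -
  let ?\<zeta> = "complex_of_real (exp t)"
  have et: "1 < exp t" "exp t < exp 1" using t by auto
  have \<zeta>a: "?\<zeta> \<in> annulus" using et by (simp add: annulus_def)
  have ln\<zeta>: "ln (cmod ?\<zeta>) = t" by simp
  have g: "geodesic D u0 u1 t z = (SUP U\<in>W D u0 u1. U (z, ?\<zeta>))"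
    by (simp add: geodesic_def uhat_def)
  show "geodesic D u0 u1 t z \<le> ereal ((1 - t) * u0 z + t * u1 z)"
    unfolding g
  proof (rule SUP_least)
    fix U assume "U \<in> W D u0 u1"
    from W_upper[OF this z \<zeta>a] show "U (z, ?\<zeta>) \<le> ereal ((1 - t) * u0 z + t * u1 z)"
      by (simp add: algebra_simps)
  qed
  have "(\<lambda>p. ereal (max (u0 (fst p) - M1 * ln (cmod (snd p))) (u1 (fst p) - M0 * (1 - ln (cmod (snd p)))))) (z, ?\<zeta>)
      \<le> (SUP U\<in>W D u0 u1. U (z, ?\<zeta>))"
    by (rule SUP_upper[OF V_in_W[OF bD u0 u1 M0 M1]])
  then show "ereal (max (u0 z - M1 * t) (u1 z - M0 * (1 - t))) \<le> geodesic D u0 u1 t z"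
    unfolding g by simp
  have "(\<lambda>p. ereal (u0 (fst p) + u1 (fst p))) (z, ?\<zeta>) \<le> (SUP U\<in>W D u0 u1. U (z, ?\<zeta>))"
    by (rule SUP_upper[OF Usum_in_W[OF bD u0 u1]])
  then show "ereal (u0 z + u1 z) \<le> geodesic D u0 u1 t z"
    unfolding g by simp
qed

theorem proposition3p1:
  fixes D :: "(complex^'n) set" and u0 u1 :: "complex^'n \<Rightarrow> real"
  assumes "hyperconvex D" and "u0 \<in> E0 D" and "u1 \<in> E0 D"
  defines "M0 \<equiv> (SUP z\<in>D. \<bar>u0 z\<bar>)" and "M1 \<equiv> (SUP z\<in>D. \<bar>u1 z\<bar>)"
  shows "(\<forall>t\<in>{0<..<1}. tends_to_zero_at_boundary D (geodesic D u0 u1 t))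
    \<and> (\<forall>\<epsilon>>0. \<exists>\<delta>>0. \<forall>t\<in>{0<..<1}. t < \<delta> \<longrightarrow>
           (\<forall>z\<in>D. \<bar>geodesic D u0 u1 t z - ereal (u0 z)\<bar> < ereal \<epsilon>))
    \<and> (\<forall>\<epsilon>>0. \<exists>\<delta>>0. \<forall>t\<in>{0<..<1}. 1 - \<delta> < t \<longrightarrow>
           (\<forall>z\<in>D. \<bar>geodesic D u0 u1 t z - ereal (u1 z)\<bar> < ereal \<epsilon>))
    \<and> (\<forall>t\<in>{0<..<1}. \<forall>z\<in>D. geodesic D u0 u1 t z \<le> ereal ((1 - t) * u0 z + t * u1 z))
    \<and> (\<forall>t\<in>{0<..<1}. \<forall>z\<in>D.
           ereal (max (u0 z - M1 * t) (u1 z - M0 * (1 - t))) \<le> geodesic D u0 u1 t z)"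
proof -
  have hc: "hyperconvex D" and u0: "u0 \<in> E0 D" and u1: "u1 \<in> E0 D" using assms by auto
  have bD: "bounded D" and ne: "D \<noteq> {}" using hc unfolding hyperconvex_def by auto
  obtain B0 where B0: "\<forall>z\<in>D. \<bar>u0 z\<bar> \<le> B0" using E0_facts(4)[OF u0] by blast
  obtain B1 where B1: "\<forall>z\<in>D. \<bar>u1 z\<bar> \<le> B1" using E0_facts(4)[OF u1] by blast
  have bdd0: "bdd_above ((\<lambda>z. \<bar>u0 z\<bar>) ` D)" using B0 by (auto intro: bdd_aboveI2)
  have bdd1: "bdd_above ((\<lambda>z. \<bar>u1 z\<bar>) ` D)" using B1 by (auto intro: bdd_aboveI2)
  have M0: "\<forall>z\<in>D. \<bar>u0 z\<bar> \<le> M0" unfolding M0_def using bdd0 by (auto intro: cSUP_upper)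
  have M1: "\<forall>z\<in>D. \<bar>u1 z\<bar> \<le> M1" unfolding M1_def using bdd1 by (auto intro: cSUP_upper)
  obtain z0 where z0: "z0 \<in> D" using ne by blast
  have "\<bar>u0 z0\<bar> \<le> M0" using M0 z0 by blast
  then have M0p: "0 \<le> M0" using abs_ge_zero[of "u0 z0"] by linarith
  have "\<bar>u1 z0\<bar> \<le> M1" using M1 z0 by blast
  then have M1p: "0 \<le> M1" using abs_ge_zero[of "u1 z0"] by linarith
  have tz0: "tends_to_zero_at_boundary D (\<lambda>z. ereal (u0 z))" using u0 unfolding E0_def by blast
  have tz1: "tends_to_zero_at_boundary D (\<lambda>z. ereal (u1 z))" using u1 unfolding E0_def by blast
  have np0: "\<And>z. z \<in> D \<Longrightarrow> u0 z \<le> 0" using E0_nonpos[OF bD u0] by blast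
  have np1: "\<And>z. z \<in> D \<Longrightarrow> u1 z \<le> 0" using E0_nonpos[OF bD u1] by blast
  note gb = geodesic_bounds[OF bD u0 u1 M0 M1]
  have P4: "\<forall>t\<in>{0<..<1}. \<forall>z\<in>D. geodesic D u0 u1 t z \<le> ereal ((1 - t) * u0 z + t * u1 z)"
    using gb(1) by blast
  have P5: "\<forall>t\<in>{0<..<1}. \<forall>z\<in>D. ereal (max (u0 z - M1 * t) (u1 z - M0 * (1 - t))) \<le> geodesic D u0 u1 t z"
    using gb(2) by blast
  have P1: "\<forall>t\<in>{0<..<1}. tends_to_zero_at_boundary D (geodesic D u0 u1 t)"
  proof (intro ballI)
    fix t :: real assume t: "t \<in> {0<..<1}"
    show "tends_to_zero_at_boundary D (geodesic D u0 u1 t)"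
      unfolding tends_to_zero_at_boundary_def
    proof (intro allI impI)
      fix \<epsilon> :: real assume \<epsilon>: "\<epsilon> > 0"
      obtain K0 where K0: "compact K0" "K0 \<subseteq> D" "\<forall>z\<in>D - K0. \<bar>ereal (u0 z)\<bar> < ereal (\<epsilon>/2)"
        using tz0[unfolded tends_to_zero_at_boundary_def, rule_format, of "\<epsilon>/2"] \<epsilon> by auto
      obtain K1 where K1: "compact K1" "K1 \<subseteq> D" "\<forall>z\<in>D - K1. \<bar>ereal (u1 z)\<bar> < ereal (\<epsilon>/2)"
        using tz1[unfolded tends_to_zero_at_boundary_def, rule_format, of "\<epsilon>/2"] \<epsilon> by auto
      show "\<exists>K. compact K \<and> K \<subseteq> D \<and> (\<forall>z\<in>D - K. \<bar>geodesic D u0 u1 t z\<bar> < ereal \<epsilon>)"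
      proof (intro exI conjI ballI)
        show "compact (K0 \<union> K1)" using K0 K1 by auto
        show "K0 \<union> K1 \<subseteq> D" using K0 K1 by auto
        fix z assume z: "z \<in> D - (K0 \<union> K1)"
        then have zD: "z \<in> D" by auto
        have a0: "\<bar>u0 z\<bar> < \<epsilon>/2" using K0(3) z by auto
        have a1: "\<bar>u1 z\<bar> < \<epsilon>/2" using K1(3) z by auto
        have lo: "ereal (0 + (u0 z + u1 z)) \<le> geodesic D u0 u1 t z" using gb(3)[OF t zD] by simp
        have "(1 - t) * u0 z \<le> 0" using t np0[OF zD] by (simp add: mult_nonneg_nonpos)
        moreover have "t * u1 z \<le> 0" using t np1[OF zD] by (simp add: mult_nonneg_nonpos)
        ultimately have up: "geodesic D u0 u1 t z \<le> ereal (0 + 0)"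
          by (intro order_trans[OF gb(1)[OF t zD]]) simp
        have "\<bar>geodesic D u0 u1 t z - ereal 0\<bar> < ereal \<epsilon>"
          by (rule ereal_abs_bound[OF lo up]) (use a0 a1 \<epsilon> in auto)
        then show "\<bar>geodesic D u0 u1 t z\<bar> < ereal \<epsilon>" by (simp add: zero_ereal_def[symmetric])
      qed
    qed
  qed
  define C where "C = M0 + M1 + 1"
  have Cpos: "C > 0" unfolding C_def using M0p M1p by simp
  have P2: "\<forall>\<epsilon>>0. \<exists>\<delta>>0. \<forall>t\<in>{0<..<1}. t < \<delta> \<longrightarrow>
           (\<forall>z\<in>D. \<bar>geodesic D u0 u1 t z - ereal (u0 z)\<bar> < ereal \<epsilon>)"
  proof (intro allI impI)
    fix \<epsilon> :: real assume \<epsilon>: "\<epsilon> > 0"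
    show "\<exists>\<delta>>0. \<forall>t\<in>{0<..<1}. t < \<delta> \<longrightarrow> (\<forall>z\<in>D. \<bar>geodesic D u0 u1 t z - ereal (u0 z)\<bar> < ereal \<epsilon>)"
    proof (intro exI conjI ballI impI)
      show "\<epsilon> / C > 0" using \<epsilon> Cpos by simp
      fix t z assume t: "t \<in> {0<..<1}" and td: "t < \<epsilon> / C" and zD: "z \<in> D"
      have t0: "0 < t" using t by simp
      have tC: "t * C < \<epsilon>" using td Cpos by (simp add: field_simps)
      have a0: "\<bar>u0 z\<bar> \<le> M0" and a1: "\<bar>u1 z\<bar> \<le> M1" using M0 M1 zD by auto
      have lo: "ereal (u0 z + - (M1 * t)) \<le> geodesic D u0 u1 t z"
        by (rule order_trans[OF _ gb(2)[OF t zD]]) simp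
      have up: "geodesic D u0 u1 t z \<le> ereal (u0 z + t * (u1 z - u0 z))"
        using gb(1)[OF t zD] by (simp add: algebra_simps)
      have "M1 * t \<le> C * t" unfolding C_def using t0 M0p by (intro mult_right_mono) auto
      then have b1: "- \<epsilon> < - (M1 * t)" using tC by (simp add: mult.commute)
      have "t * (u1 z - u0 z) \<le> t * C"
        using t0 a0 a1 unfolding C_def by (intro mult_left_mono) (auto simp: abs_le_iff)
      then have b2: "t * (u1 z - u0 z) < \<epsilon>" using tC by simp
      show "\<bar>geodesic D u0 u1 t z - ereal (u0 z)\<bar> < ereal \<epsilon>"
        by (rule ereal_abs_bound[OF lo up b1 b2])
    qed
  qed
  have P3: "\<forall>\<epsilon>>0. \<exists>\<delta>>0. \<forall>t\<in>{0<..<1}. 1 - \<delta> < t \<longrightarrow>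
           (\<forall>z\<in>D. \<bar>geodesic D u0 u1 t z - ereal (u1 z)\<bar> < ereal \<epsilon>)"
  proof (intro allI impI)
    fix \<epsilon> :: real assume \<epsilon>: "\<epsilon> > 0"
    show "\<exists>\<delta>>0. \<forall>t\<in>{0<..<1}. 1 - \<delta> < t \<longrightarrow> (\<forall>z\<in>D. \<bar>geodesic D u0 u1 t z - ereal (u1 z)\<bar> < ereal \<epsilon>)"
    proof (intro exI conjI ballI impI)
      show "\<epsilon> / C > 0" using \<epsilon> Cpos by simp
      fix t z assume t: "t \<in> {0<..<1}" and td: "1 - \<epsilon> / C < t" and zD: "z \<in> D"
      define s where "s = 1 - t"
      have s0: "0 < s" using t by (simp add: s_def)
      have sd: "s < \<epsilon> / C" using td by (simp add: s_def)
      have sC: "s * C < \<epsilon>" using sd Cpos by (simp add: field_simps)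
      have a0: "\<bar>u0 z\<bar> \<le> M0" and a1: "\<bar>u1 z\<bar> \<le> M1" using M0 M1 zD by auto
      have lo: "ereal (u1 z + - (M0 * s)) \<le> geodesic D u0 u1 t z"
        unfolding s_def by (rule order_trans[OF _ gb(2)[OF t zD]]) simp
      have up: "geodesic D u0 u1 t z \<le> ereal (u1 z + s * (u0 z - u1 z))"
        using gb(1)[OF t zD] unfolding s_def by (simp add: algebra_simps)
      have "M0 * s \<le> C * s" unfolding C_def using s0 M1p by (intro mult_right_mono) auto
      then have b1: "- \<epsilon> < - (M0 * s)" using sC by (simp add: mult.commute)
      have "s * (u0 z - u1 z) \<le> s * C"
        using s0 a0 a1 unfolding C_def by (intro mult_left_mono) (auto simp: abs_le_iff)
      then have b2: "s * (u0 z - u1 z) < \<epsilon>" using sC by simp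
      show "\<bar>geodesic D u0 u1 t z - ereal (u1 z)\<bar> < ereal \<epsilon>"
        by (rule ereal_abs_bound[OF lo up b1 b2])
    qed
  qed
  show ?thesis using P1 P2 P3 P4 P5 by blast
qed


end
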